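(* Let $F$ be a field, $R$ a Hopf $F$-algebra, and let $T=R[x;\sigma,\delta]$ be a Hopf $F$-algebra containing $R$ as a Hopf subalgebra, where $\sigma$ is an $F$-algebra automorphism of $R$ and $\delta$ a $\sigma$-derivation of $R$. Suppose that $R\otimes R$ is a domain. Then $$\Delta(x)=s(1\otimes x)+t(x\otimes 1)+v(x\otimes x)+w$$ for some $s,t,v,w\in R\otimes R$.
   Context: Hopf algebras have bijective antipode. $R[x;\sigma,\delta]$ is the skew polynomial algebra generated by $R$ and $x$ with $xr-\sigma(r)x=\delta(r)$ for $r\in R$, where $\delta(ab)=\delta(a)b+\sigma(a)\delta(b)$. *)

theory Defs
  imports Complex_Main
begin

definition falgebra :: "('f::field \<Rightarrow> 'a::ring_1 \<Rightarrow> 'a) \<Rightarrow> bool" where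
  "falgebra sc \<longleftrightarrow> Vector_Spaces.vector_space sc \<and>
     (\<forall>c a b. sc c (a * b) = sc c a * b \<and> sc c (a * b) = a * sc c b)"

text \<open>Tensor product V \<otimes> W realised as a vector space U with a bilinear map tens,
  characterised (up to unique isomorphism) by: pure tensors span U, and for linearly
  independent sets A of V and B of W the family (a \<otimes> b) indexed by A \<times> B is linearly
  independent (so bases go to bases).\<close>

definition is_tensor ::
  "('f::field \<Rightarrow> 'v::ab_group_add \<Rightarrow> 'v) \<Rightarrow> ('f \<Rightarrow> 'w::ab_group_add \<Rightarrow> 'w) \<Rightarrow>
   ('f \<Rightarrow> 'u::ab_group_add \<Rightarrow> 'u) \<Rightarrow> ('v \<Rightarrow> 'w \<Rightarrow> 'u) \<Rightarrow> bool" where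
  "is_tensor scV scW scU tens \<longleftrightarrow>
     Vector_Spaces.vector_space scV \<and> Vector_Spaces.vector_space scW \<and> Vector_Spaces.vector_space scU \<and>
     (\<forall>w. Vector_Spaces.linear scV scU (\<lambda>v. tens v w)) \<and>
     (\<forall>v. Vector_Spaces.linear scW scU (tens v)) \<and>
     module.span scU (case_prod tens ` UNIV) = UNIV \<and>
     (\<forall>A B. \<not> module.dependent scV A \<and> \<not> module.dependent scW B \<longrightarrow>
        \<not> module.dependent scU (case_prod tens ` (A \<times> B)) \<and> inj_on (case_prod tens) (A \<times> B))"

definition tsum :: "('v \<Rightarrow> 'w \<Rightarrow> 'u::monoid_add) \<Rightarrow> ('v \<times> 'w) list \<Rightarrow> 'u" where
  "tsum tens ps = sum_list (map (case_prod tens) ps)"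

text \<open>Hopf algebra (with bijective antipode, as a standing convention) on the F-algebra
  T with scalar multiplication sc.  TT = T \<otimes> T (algebra, via tens), TTT = (T \<otimes> T) \<otimes> T
  (via tens3).  Maps out of tensor products (\<epsilon> \<otimes> id, S \<otimes> id, multiplication,
  \<Delta> \<otimes> id, id \<otimes> \<Delta>) are evaluated on arbitrary representations as sums of pure tensors;
  these are well defined by the tensor product property.\<close>

definition hopf_algebra ::
  "('f::field \<Rightarrow> 't::ring_1 \<Rightarrow> 't) \<Rightarrow> ('f \<Rightarrow> 'u::ring_1 \<Rightarrow> 'u) \<Rightarrow> ('t \<Rightarrow> 't \<Rightarrow> 'u) \<Rightarrow>
   ('f \<Rightarrow> 'w::ab_group_add \<Rightarrow> 'w) \<Rightarrow> ('u \<Rightarrow> 't \<Rightarrow> 'w) \<Rightarrow>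
   ('t \<Rightarrow> 'u) \<Rightarrow> ('t \<Rightarrow> 'f) \<Rightarrow> ('t \<Rightarrow> 't) \<Rightarrow> bool" where
  "hopf_algebra sc scU tens scW tens3 \<Delta> \<epsilon> S \<longleftrightarrow>
     falgebra sc \<and> falgebra scU \<and>
     is_tensor sc sc scU tens \<and>
     (\<forall>a b c d. tens a b * tens c d = tens (a * c) (b * d)) \<and> tens 1 1 = 1 \<and>
     is_tensor scU sc scW tens3 \<and>
     Vector_Spaces.linear sc scU \<Delta> \<and> (\<forall>a b. \<Delta> (a * b) = \<Delta> a * \<Delta> b) \<and> \<Delta> 1 = 1 \<and>
     Vector_Spaces.linear sc ((*) :: 'f \<Rightarrow> 'f \<Rightarrow> 'f) \<epsilon> \<and>
       (\<forall>a b. \<epsilon> (a * b) = \<epsilon> a * \<epsilon> b) \<and> \<epsilon> 1 = 1 \<and>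
     Vector_Spaces.linear sc sc S \<and> bij S \<and>
     (\<forall>a ps. \<Delta> a = tsum tens ps \<longrightarrow>
        (\<Sum>(b, c)\<leftarrow>ps. sc (\<epsilon> b) c) = a \<and> (\<Sum>(b, c)\<leftarrow>ps. sc (\<epsilon> c) b) = a) \<and>
     (\<forall>a ps. \<Delta> a = tsum tens ps \<longrightarrow>
        (\<Sum>(b, c)\<leftarrow>ps. S b * c) = sc (\<epsilon> a) 1 \<and> (\<Sum>(b, c)\<leftarrow>ps. b * S c) = sc (\<epsilon> a) 1) \<and>
     (\<forall>a ps qs. \<Delta> a = tsum tens ps \<and> length qs = length ps \<and>
        (\<forall>i<length ps. \<Delta> (snd (ps ! i)) = tsum tens (qs ! i)) \<longrightarrow>
        (\<Sum>i<length ps. tens3 (\<Delta> (fst (ps ! i))) (snd (ps ! i))) =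
        (\<Sum>i<length ps. \<Sum>(d, e)\<leftarrow>qs ! i. tens3 (tens (fst (ps ! i)) d) e))"

text \<open>R \<otimes> R, identified with its (injective, as F is a field) image in T \<otimes> T.\<close>
definition tensor_sub :: "('f::field \<Rightarrow> 'u::ab_group_add \<Rightarrow> 'u) \<Rightarrow> ('t \<Rightarrow> 't \<Rightarrow> 'u) \<Rightarrow> 't set \<Rightarrow> 'u set" where
  "tensor_sub scU tens R = module.span scU (case_prod tens ` (R \<times> R))"

definition hopf_subalgebra ::
  "('f::field \<Rightarrow> 't::ring_1 \<Rightarrow> 't) \<Rightarrow> ('f \<Rightarrow> 'u::ring_1 \<Rightarrow> 'u) \<Rightarrow> ('t \<Rightarrow> 't \<Rightarrow> 'u) \<Rightarrow>
   ('t \<Rightarrow> 'u) \<Rightarrow> ('t \<Rightarrow> 't) \<Rightarrow> 't set \<Rightarrow> bool" where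
  "hopf_subalgebra sc scU tens \<Delta> S R \<longleftrightarrow>
     module.subspace sc R \<and> 1 \<in> R \<and> (\<forall>a\<in>R. \<forall>b\<in>R. a * b \<in> R) \<and>
     \<Delta> ` R \<subseteq> tensor_sub scU tens R \<and> bij_betw S R R"

definition falg_automorphism :: "('f::field \<Rightarrow> 't::ring_1 \<Rightarrow> 't) \<Rightarrow> 't set \<Rightarrow> ('t \<Rightarrow> 't) \<Rightarrow> bool" where
  "falg_automorphism sc R \<sigma> \<longleftrightarrow> bij_betw \<sigma> R R \<and> \<sigma> 1 = 1 \<and>
     (\<forall>a\<in>R. \<forall>b\<in>R. \<sigma> (a + b) = \<sigma> a + \<sigma> b \<and> \<sigma> (a * b) = \<sigma> a * \<sigma> b) \<and>
     (\<forall>c. \<forall>a\<in>R. \<sigma> (sc c a) = sc c (\<sigma> a))"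

definition sigma_derivation :: "('f::field \<Rightarrow> 't::ring_1 \<Rightarrow> 't) \<Rightarrow> 't set \<Rightarrow> ('t \<Rightarrow> 't) \<Rightarrow> ('t \<Rightarrow> 't) \<Rightarrow> bool" where
  "sigma_derivation sc R \<sigma> \<delta> \<longleftrightarrow> \<delta> ` R \<subseteq> R \<and>
     (\<forall>a\<in>R. \<forall>b\<in>R. \<delta> (a + b) = \<delta> a + \<delta> b \<and> \<delta> (a * b) = \<delta> a * b + \<sigma> a * \<delta> b) \<and>
     (\<forall>c. \<forall>a\<in>R. \<delta> (sc c a) = sc c (\<delta> a))"

text \<open>The ring T (all of the type) is the skew polynomial ring R[x;\<sigma>,\<delta>]: T is a free left
  R-module with basis the powers of x, and x r - \<sigma>(r) x = \<delta>(r) for r in R.\<close>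
definition is_skew_poly_ring :: "'t::ring_1 set \<Rightarrow> ('t \<Rightarrow> 't) \<Rightarrow> ('t \<Rightarrow> 't) \<Rightarrow> 't \<Rightarrow> bool" where
  "is_skew_poly_ring R \<sigma> \<delta> x \<longleftrightarrow>
     (\<forall>r\<in>R. x * r - \<sigma> r * x = \<delta> r) \<and>
     (\<forall>t. \<exists>n c. (\<forall>i<n. c i \<in> R) \<and> t = (\<Sum>i<n. c i * x ^ i)) \<and>
     (\<forall>n c. (\<forall>i<n. c i \<in> R) \<and> (\<Sum>i<n. c i * x ^ i) = 0 \<longrightarrow> (\<forall>i<n. c i = 0))"

definition is_domain_sub :: "'u::ring_1 set \<Rightarrow> bool" where
  "is_domain_sub D \<longleftrightarrow> (1::'u) \<noteq> 0 \<and> (\<forall>u\<in>D. \<forall>v\<in>D. u * v = 0 \<longrightarrow> u = 0 \<or> v = 0)"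

end

theory Submission
  imports Defs
begin


lemma vs_field: "Vector_Spaces.vector_space ((*) :: 'f::field \<Rightarrow> 'f \<Rightarrow> 'f)"
  by unfold_locales (auto simp: algebra_simps)

lemma vsp: "Vector_Spaces.vector_space s1 \<Longrightarrow> Vector_Spaces.vector_space s2 \<Longrightarrow> vector_space_pair s1 s2"
  by (simp add: vector_space_pair_def)

lemma basis_UNIV:
  assumes "Vector_Spaces.vector_space s"
  obtains B where "\<not> module.dependent s B" "module.span s B = UNIV"
proof -
  interpret vector_space s by fact
  obtain B where "independent B" "UNIV \<subseteq> span B" using basis_exists[of UNIV] by metis
  then show ?thesis using that by auto
qed

lemma tensor_lift:
  fixes tens :: "'v::ab_group_add \<Rightarrow> 'w::ab_group_add \<Rightarrow> 'u::ab_group_add"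
    and \<phi> :: "'v \<Rightarrow> 'w \<Rightarrow> 'x::ab_group_add"
  assumes T: "is_tensor scV scW scU tens" and X: "Vector_Spaces.vector_space scX"
    and l1: "\<And>w. Vector_Spaces.linear scV scX (\<lambda>v. \<phi> v w)"
    and l2: "\<And>v. Vector_Spaces.linear scW scX (\<phi> v)"
  shows "\<exists>L. Vector_Spaces.linear scU scX L \<and> (\<forall>v w. L (tens v w) = \<phi> v w)"
proof -
  have V: "Vector_Spaces.vector_space scV" and W: "Vector_Spaces.vector_space scW"
    and U: "Vector_Spaces.vector_space scU"
    and t1: "\<And>w. Vector_Spaces.linear scV scU (\<lambda>v. tens v w)"
    and t2: "\<And>v. Vector_Spaces.linear scW scU (tens v)"
    and ind: "\<And>A B. \<not> module.dependent scV A \<Longrightarrow> \<not> module.dependent scW B \<Longrightarrow>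
        \<not> module.dependent scU (case_prod tens ` (A \<times> B)) \<and> inj_on (case_prod tens) (A \<times> B)"
    using T unfolding is_tensor_def by auto
  obtain BV where BV: "\<not> module.dependent scV BV" "module.span scV BV = UNIV" using basis_UNIV[OF V] by metis
  obtain BW where BW: "\<not> module.dependent scW BW" "module.span scW BW = UNIV" using basis_UNIV[OF W] by metis
  note I = ind[OF BV(1) BW(1)]
  interpret p: vector_space_pair scU scX using vsp[OF U X] .
  obtain g where g: "Vector_Spaces.linear scU scX g"
    "\<forall>z\<in>case_prod tens ` (BV \<times> BW). g z = case_prod \<phi> (the_inv_into (BV \<times> BW) (case_prod tens) z)"
    using p.linear_independent_extend[OF I[THEN conjunct1], of "\<lambda>z. case_prod \<phi> (the_inv_into (BV \<times> BW) (case_prod tens) z)"] by blast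
  have gb: "g (tens b c) = \<phi> b c" if "b \<in> BV" "c \<in> BW" for b c
    using g(2) that the_inv_into_f_f[OF I[THEN conjunct2], of "(b,c)"] by auto
  interpret pv: vector_space_pair scV scX using vsp[OF V X] .
  interpret pw: vector_space_pair scW scX using vsp[OF W X] .
  have gc: "g (tens v c) = \<phi> v c" if "c \<in> BW" for v c
  proof -
    have "Vector_Spaces.linear scV scX (g \<circ> (\<lambda>v. tens v c))"
      using Vector_Spaces.linear_compose[OF t1 g(1)] .
    then show ?thesis using pv.linear_eq_on[of "g \<circ> (\<lambda>v. tens v c)" "\<lambda>v. \<phi> v c" v BV] l1 gb[OF _ that] BV(2)
      by auto
  qed
  have "g (tens v w) = \<phi> v w" for v w
  proof -
    have "Vector_Spaces.linear scW scX (g \<circ> tens v)"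
      using Vector_Spaces.linear_compose[OF t2 g(1)] .
    then show ?thesis using pw.linear_eq_on[of "g \<circ> tens v" "\<phi> v" w BW] l2 gc BW(2)
      by auto
  qed
  then show ?thesis using g(1) by blast
qed

lemma tensor_ext:
  assumes T: "is_tensor scV scW scU tens" and X: "Vector_Spaces.vector_space scX"
    and "Vector_Spaces.linear scU scX f" "Vector_Spaces.linear scU scX g"
    and "\<And>v w. f (tens v w) = g (tens v w)"
  shows "f u = g u"
proof -
  have U: "Vector_Spaces.vector_space scU" and sp: "module.span scU (case_prod tens ` UNIV) = UNIV"
    using T unfolding is_tensor_def by auto
  interpret p: vector_space_pair scU scX using vsp[OF U X] .
  have "\<And>b. b \<in> case_prod tens ` UNIV \<Longrightarrow> f b = g b" using assms(5) by auto
  then show ?thesis using p.linear_eq_on[of f g u "case_prod tens ` UNIV"] assms(3,4) sp by blast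
qed



locale setting =
  fixes sc :: "'f::field \<Rightarrow> 't::ring_1 \<Rightarrow> 't"
    and scU :: "'f \<Rightarrow> 'u::ring_1 \<Rightarrow> 'u" and tens :: "'t \<Rightarrow> 't \<Rightarrow> 'u"
    and scW :: "'f \<Rightarrow> 'w::ab_group_add \<Rightarrow> 'w" and tens3 :: "'u \<Rightarrow> 't \<Rightarrow> 'w"
    and \<Delta> :: "'t \<Rightarrow> 'u" and \<epsilon> :: "'t \<Rightarrow> 'f" and S :: "'t \<Rightarrow> 't"
    and R :: "'t set" and \<sigma> \<delta> :: "'t \<Rightarrow> 't" and x :: 't
  assumes H: "hopf_algebra sc scU tens scW tens3 \<Delta> \<epsilon> S"
    and HS: "hopf_subalgebra sc scU tens \<Delta> S R"
    and FA: "falg_automorphism sc R \<sigma>"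
    and SD: "sigma_derivation sc R \<sigma> \<delta>"
    and SK: "is_skew_poly_ring R \<sigma> \<delta> x"
    and DOM: "is_domain_sub (tensor_sub scU tens R)"
begin



lemma Hp: "falgebra sc" "falgebra scU" "is_tensor sc sc scU tens"
  "\<forall>a b c d. tens a b * tens c d = tens (a * c) (b * d)" "tens 1 1 = 1"
  "is_tensor scU sc scW tens3" "Vector_Spaces.linear sc scU \<Delta>" "\<forall>a b. \<Delta> (a * b) = \<Delta> a * \<Delta> b"
  "\<Delta> 1 = 1"
  "\<forall>a ps. \<Delta> a = tsum tens ps \<longrightarrow>
        (\<Sum>(b, c)\<leftarrow>ps. sc (\<epsilon> b) c) = a \<and> (\<Sum>(b, c)\<leftarrow>ps. sc (\<epsilon> c) b) = a"
  "\<forall>a ps qs. \<Delta> a = tsum tens ps \<and> length qs = length ps \<and>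
        (\<forall>i<length ps. \<Delta> (snd (ps ! i)) = tsum tens (qs ! i)) \<longrightarrow>
        (\<Sum>i<length ps. tens3 (\<Delta> (fst (ps ! i))) (snd (ps ! i))) =
        (\<Sum>i<length ps. \<Sum>(d, e)\<leftarrow>qs ! i. tens3 (tens (fst (ps ! i)) d) e)"
  apply (insert H[unfolded hopf_algebra_def]) apply ((elim conjE)?, assumption)+ done

lemma falg_parts: "falgebra s \<Longrightarrow> Vector_Spaces.vector_space s"
   "falgebra s \<Longrightarrow> s c (a * b) = s c a * b"  "falgebra s \<Longrightarrow> s c (a * b) = a * s c b"
  unfolding falgebra_def by blast+

lemma tensor_parts: "is_tensor s1 s2 s3 t \<Longrightarrow> Vector_Spaces.vector_space s3"
  "is_tensor s1 s2 s3 t \<Longrightarrow> Vector_Spaces.linear s1 s3 (\<lambda>v. t v w)"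
  "is_tensor s1 s2 s3 t \<Longrightarrow> Vector_Spaces.linear s2 s3 (t v)"
  unfolding is_tensor_def by blast+

lemma VT: "Vector_Spaces.vector_space sc" using falg_parts(1)[OF Hp(1)] .
lemma VU: "Vector_Spaces.vector_space scU" using falg_parts(1)[OF Hp(2)] .
lemma TT: "is_tensor sc sc scU tens" by (rule Hp(3))
lemma TW: "is_tensor scU sc scW tens3" by (rule Hp(6))
lemma VW: "Vector_Spaces.vector_space scW" using tensor_parts(1)[OF TW] .

interpretation T: vector_space sc by (rule VT)
interpretation U: vector_space scU by (rule VU)
interpretation W: vector_space scW by (rule VW)

lemma scT_mult: "sc c (a * b) = sc c a * b" "sc c (a * b) = a * sc c b"
  using falg_parts(2,3)[OF Hp(1)] by auto
lemma scU_mult: "scU c (a * b) = scU c a * b" "scU c (a * b) = a * scU c b"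
  using falg_parts(2,3)[OF Hp(2)] by auto

lemma tens_lin1: "Vector_Spaces.linear sc scU (\<lambda>v. tens v w)" using tensor_parts(2)[OF TT] .
lemma tens_lin2: "Vector_Spaces.linear sc scU (tens v)" using tensor_parts(3)[OF TT] .
lemma tens3_lin1: "Vector_Spaces.linear scU scW (\<lambda>v. tens3 v w)" using tensor_parts(2)[OF TW] .
lemma tens3_lin2: "Vector_Spaces.linear sc scW (tens3 v)" using tensor_parts(3)[OF TW] .

lemma tens_add1: "tens (a + b) c = tens a c + tens b c"
  using tens_lin1[of c] by (simp add: Vector_Spaces.linear_iff)
lemma tens_add2: "tens c (a + b) = tens c a + tens c b"
  using tens_lin2[of c] by (simp add: Vector_Spaces.linear_iff)
lemma tens_sc1: "tens (sc k a) c = scU k (tens a c)"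
  using tens_lin1[of c] by (simp add: Vector_Spaces.linear_iff)
lemma tens_sc2: "tens c (sc k a) = scU k (tens c a)"
  using tens_lin2[of c] by (simp add: Vector_Spaces.linear_iff)
lemma tens_zero1[simp]: "tens 0 c = 0"
  using tens_add1[of 0 0 c] by simp
lemma tens_zero2[simp]: "tens c 0 = 0"
  using tens_add2[of c 0 0] by simp
lemma tens_sum1: "tens (\<Sum>i\<in>I. f i) c = (\<Sum>i\<in>I. tens (f i) c)"
  by (induction I rule: infinite_finite_induct) (auto simp: tens_add1)
lemma tens_sum2: "tens c (\<Sum>i\<in>I. f i) = (\<Sum>i\<in>I. tens c (f i))"
  by (induction I rule: infinite_finite_induct) (auto simp: tens_add2)
lemma tens3_add1: "tens3 (a + b) c = tens3 a c + tens3 b c"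
  using tens3_lin1[of c] by (simp add: Vector_Spaces.linear_iff)
lemma tens3_sc1: "tens3 (scU k a) c = scW k (tens3 a c)"
  using tens3_lin1[of c] by (simp add: Vector_Spaces.linear_iff)

lemma tens_mult: "tens a b * tens c d = tens (a * c) (b * d)"
  using Hp(4) by blast
lemma tens_one: "tens 1 1 = 1" by (rule Hp(5))

lemma D_lin: "Vector_Spaces.linear sc scU \<Delta>" by (rule Hp(7))
lemma D_mult: "\<Delta> (a * b) = \<Delta> a * \<Delta> b" using Hp(8) by blast
lemma D_one: "\<Delta> 1 = 1" by (rule Hp(9))
lemma D_add: "\<Delta> (a + b) = \<Delta> a + \<Delta> b" using D_lin by (simp add: Vector_Spaces.linear_iff)
lemma D_sc: "\<Delta> (sc k a) = scU k (\<Delta> a)" using D_lin by (simp add: Vector_Spaces.linear_iff)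
lemma D_zero: "\<Delta> 0 = 0" using D_add[of 0 0] by simp
lemma D_sum: "\<Delta> (\<Sum>i\<in>I. f i) = (\<Sum>i\<in>I. \<Delta> (f i))"
  by (induction I rule: infinite_finite_induct) (auto simp: D_add D_zero)
lemma D_pow: "\<Delta> (a ^ n) = \<Delta> a ^ n"
  by (induction n) (auto simp: D_one D_mult)

lemma counit: "\<Delta> a = tsum tens ps \<Longrightarrow> (\<Sum>(b, c)\<leftarrow>ps. sc (\<epsilon> b) c) = a"
  using Hp(10) by blast
lemma coassoc: "\<Delta> a = tsum tens ps \<Longrightarrow> length qs = length ps \<Longrightarrow>
        (\<forall>i<length ps. \<Delta> (snd (ps ! i)) = tsum tens (qs ! i)) \<Longrightarrow>
        (\<Sum>i<length ps. tens3 (\<Delta> (fst (ps ! i))) (snd (ps ! i))) =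
        (\<Sum>i<length ps. \<Sum>(d, e)\<leftarrow>qs ! i. tens3 (tens (fst (ps ! i)) d) e)"
  using Hp(11) by blast

lemma D_inj0: "\<Delta> a = 0 \<Longrightarrow> a = 0"
  using counit[of a "[]"] by (simp add: tsum_def)

lemma HSp: "module.subspace sc R" "1 \<in> R" "\<forall>a\<in>R. \<forall>b\<in>R. a * b \<in> R"
     "\<Delta> ` R \<subseteq> tensor_sub scU tens R"
  apply (insert HS[unfolded hopf_subalgebra_def]) apply ((elim conjE)?, assumption)+ done

lemma R_sub: "module.subspace sc R" by (rule HSp(1))
lemma R_zero[simp]: "0 \<in> R" using R_sub T.subspace_0 by blast
lemma R_add: "a \<in> R \<Longrightarrow> b \<in> R \<Longrightarrow> a + b \<in> R" using R_sub T.subspace_add by blast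
lemma R_sc: "a \<in> R \<Longrightarrow> sc k a \<in> R" using R_sub T.subspace_scale by blast
lemma R_diff: "a \<in> R \<Longrightarrow> b \<in> R \<Longrightarrow> a - b \<in> R" using R_sub T.subspace_diff by blast
lemma R_one[simp]: "1 \<in> R" by (rule HSp(2))
lemma R_mult: "a \<in> R \<Longrightarrow> b \<in> R \<Longrightarrow> a * b \<in> R" using HSp(3) by blast
lemma R_sum: "(\<And>i. i \<in> I \<Longrightarrow> f i \<in> R) \<Longrightarrow> (\<Sum>i\<in>I. f i) \<in> R"
  by (induction I rule: infinite_finite_induct) (auto simp: R_add)
lemma D_R: "a \<in> R \<Longrightarrow> \<Delta> a \<in> tensor_sub scU tens R" using HSp(4) by blast

lemma FAp: "bij_betw \<sigma> R R" "\<sigma> 1 = 1"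
     "\<forall>a\<in>R. \<forall>b\<in>R. \<sigma> (a + b) = \<sigma> a + \<sigma> b \<and> \<sigma> (a * b) = \<sigma> a * \<sigma> b"
     "\<forall>c. \<forall>a\<in>R. \<sigma> (sc c a) = sc c (\<sigma> a)"
  apply (insert FA[unfolded falg_automorphism_def]) apply ((elim conjE)?, assumption)+ done

lemma sig_bij: "bij_betw \<sigma> R R" by (rule FAp(1))
lemma sig_R: "a \<in> R \<Longrightarrow> \<sigma> a \<in> R" using sig_bij unfolding bij_betw_def by blast
lemma sig_add: "a \<in> R \<Longrightarrow> b \<in> R \<Longrightarrow> \<sigma> (a + b) = \<sigma> a + \<sigma> b" using FAp(3) by blast
lemma sig_mult: "a \<in> R \<Longrightarrow> b \<in> R \<Longrightarrow> \<sigma> (a * b) = \<sigma> a * \<sigma> b" using FAp(3) by blast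
lemma sig_sc: "a \<in> R \<Longrightarrow> \<sigma> (sc k a) = sc k (\<sigma> a)" using FAp(4) by blast
lemma sig_zero[simp]: "\<sigma> 0 = 0" using sig_add[of 0 0] by simp

lemma SDp: "\<delta> ` R \<subseteq> R"
     "\<forall>a\<in>R. \<forall>b\<in>R. \<delta> (a + b) = \<delta> a + \<delta> b \<and> \<delta> (a * b) = \<delta> a * b + \<sigma> a * \<delta> b"
  apply (insert SD[unfolded sigma_derivation_def]) apply ((elim conjE)?, assumption)+ done
lemma del_R: "a \<in> R \<Longrightarrow> \<delta> a \<in> R" using SDp(1) by blast
lemma del_add: "a \<in> R \<Longrightarrow> b \<in> R \<Longrightarrow> \<delta> (a + b) = \<delta> a + \<delta> b" using SDp(2) by blast
lemma del_zero[simp]: "\<delta> 0 = 0" using del_add[of 0 0] by simp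

lemma SKp: "\<forall>r\<in>R. x * r - \<sigma> r * x = \<delta> r"
     "\<forall>t. \<exists>n c. (\<forall>i<n. c i \<in> R) \<and> t = (\<Sum>i<n. c i * x ^ i)"
     "\<forall>n c. (\<forall>i<n. c i \<in> R) \<and> (\<Sum>i<n. c i * x ^ i) = 0 \<longrightarrow> (\<forall>i<n. c i = 0)"
  apply (insert SK[unfolded is_skew_poly_ring_def]) apply ((elim conjE)?, assumption)+ done
lemma skew: "r \<in> R \<Longrightarrow> x * r = \<sigma> r * x + \<delta> r" using SKp(1)
  by (metis diff_add_cancel add.commute)

lemma one_neq_zero_U: "(1::'u) \<noteq> 0" using DOM unfolding is_domain_sub_def by blast
lemma A_domain: "u \<in> tensor_sub scU tens R \<Longrightarrow> v \<in> tensor_sub scU tens R \<Longrightarrow> u * v = 0 \<Longrightarrow> u = 0 \<or> v = 0"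
  using DOM unfolding is_domain_sub_def by blast

definition isrep :: "(nat \<Rightarrow> 't) \<Rightarrow> nat \<Rightarrow> 't \<Rightarrow> bool" where
  "isrep c n t \<longleftrightarrow> (\<forall>k. c k \<in> R) \<and> (\<forall>k\<ge>n. c k = 0) \<and> t = (\<Sum>k<n. c k * x ^ k)"

lemma isrep_mono: "isrep c n t \<Longrightarrow> n \<le> m \<Longrightarrow> isrep c m t"
proof -
  assume a: "isrep c n t" "n \<le> m"
  have "(\<Sum>k<n. c k * x ^ k) = (\<Sum>k<m. c k * x ^ k)"
    using a by (intro sum.mono_neutral_left) (auto simp: isrep_def)
  then show ?thesis using a unfolding isrep_def by auto
qed

lemma rep_exists: "\<exists>c n. isrep c n t"
proof -
  obtain n c where "\<forall>i<n. c i \<in> R" "t = (\<Sum>i<n. c i * x ^ i)"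
    using SKp(2) by blast
  then show ?thesis unfolding isrep_def
    by (intro exI[of _ "\<lambda>k. if k < n then c k else 0"] exI[of _ n]) auto
qed

lemma rep_unique: "isrep c n t \<Longrightarrow> isrep d m t \<Longrightarrow> c = d"
proof -
  assume a: "isrep c n t" "isrep d m t"
  let ?N = "max n m"
  have b: "isrep c ?N t" "isrep d ?N t" using a isrep_mono by auto
  have "(\<Sum>k<?N. (c k - d k) * x ^ k) = 0"
    using b unfolding isrep_def by (simp add: algebra_simps sum_subtractf)
  moreover have "\<forall>k<?N. c k - d k \<in> R" using b unfolding isrep_def by (auto intro: R_diff)
  ultimately have "\<forall>k<?N. c k - d k = 0"
    using spec[OF spec[OF SKp(3), of ?N], of "\<lambda>k. c k - d k"] by blast
  then show "c = d" using b unfolding isrep_def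
    by (metis eq_iff_diff_eq_0 not_le ext)
qed

definition coef :: "nat \<Rightarrow> 't \<Rightarrow> 't" where
  "coef i t = (SOME c. \<exists>n. isrep c n t) i"

lemma coef_isrep: "\<exists>n. isrep (\<lambda>i. coef i t) n t"
proof -
  have "\<exists>c n. isrep c n t" by (rule rep_exists)
  then have "\<exists>n. isrep (SOME c. \<exists>n. isrep c n t) n t" by (rule someI_ex)
  then show ?thesis unfolding coef_def by simp
qed

lemma coef_eq: "isrep c n t \<Longrightarrow> coef i t = c i"
  using coef_isrep[of t] rep_unique by metis

lemma coef_R: "coef i t \<in> R" using coef_isrep[of t] unfolding isrep_def by auto

lemma coef_expand: "\<exists>n. \<forall>m\<ge>n. isrep (\<lambda>i. coef i t) m t"
  using coef_isrep[of t] isrep_mono by blast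

lemma coef_add: "coef i (a + b) = coef i a + coef i b"
proof -
  obtain n where n: "isrep (\<lambda>i. coef i a) n a" using coef_isrep by blast
  obtain m where m: "isrep (\<lambda>i. coef i b) m b" using coef_isrep by blast
  have "isrep (\<lambda>i. coef i a + coef i b) (max n m) (a + b)"
    using isrep_mono[OF n, of "max n m"] isrep_mono[OF m, of "max n m"]
    unfolding isrep_def by (auto simp: R_add sum.distrib distrib_right)
  then show ?thesis by (rule coef_eq)
qed

lemma coef_sc: "coef i (sc k a) = sc k (coef i a)"
proof -
  obtain n where n: "isrep (\<lambda>i. coef i a) n a" using coef_isrep by blast
  have "sc k a = sc k (\<Sum>i<n. coef i a * x ^ i)" using n unfolding isrep_def by metis
  also have "\<dots> = (\<Sum>i<n. sc k (coef i a) * x ^ i)" by (simp add: T.scale_sum_right scT_mult(1))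
  finally have "isrep (\<lambda>i. sc k (coef i a)) n (sc k a)"
    using n unfolding isrep_def by (auto simp: R_sc)
  then show ?thesis by (rule coef_eq)
qed

lemma coef_lin: "Vector_Spaces.linear sc sc (coef i)"
  by (rule Vector_Spaces.linear_iff[THEN iffD2]) (auto simp: coef_add coef_sc VT)

lemma coef_zero[simp]: "coef i 0 = 0" using coef_add[of i 0 0] by simp
lemma coef_sum: "coef i (\<Sum>j\<in>I. f j) = (\<Sum>j\<in>I. coef i (f j))"
  by (induction I rule: infinite_finite_induct) (auto simp: coef_add)

lemma coef_monom: "r \<in> R \<Longrightarrow> coef i (r * x ^ j) = (if i = j then r else 0)"
proof -
  assume r: "r \<in> R"
  have "(\<Sum>k<Suc j. (if k = j then r else 0) * x ^ k) = (\<Sum>k\<in>{j}. (if k = j then r else 0) * x ^ k)"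
    by (intro sum.mono_neutral_right) auto
  then have "isrep (\<lambda>k. if k = j then r else 0) (Suc j) (r * x ^ j)"
    using r unfolding isrep_def by auto
  then show ?thesis by (rule coef_eq)
qed

lemma coef_R_elem: "r \<in> R \<Longrightarrow> coef i r = (if i = 0 then r else 0)"
  using coef_monom[of r i 0] by simp

lemma coef_left: "r \<in> R \<Longrightarrow> coef i (r * t) = r * coef i t"
proof -
  assume r: "r \<in> R"
  obtain n where n: "isrep (\<lambda>i. coef i t) n t" using coef_isrep by blast
  have "r * t = r * (\<Sum>i<n. coef i t * x ^ i)" using n unfolding isrep_def by metis
  also have "\<dots> = (\<Sum>i<n. (r * coef i t) * x ^ i)" by (simp add: sum_distrib_left mult.assoc)
  finally have "isrep (\<lambda>i. r * coef i t) n (r * t)"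
    using n r unfolding isrep_def by (auto simp: R_mult)
  then show ?thesis by (rule coef_eq)
qed

definition fil :: "nat \<Rightarrow> 't \<Rightarrow> bool" where "fil n t \<longleftrightarrow> (\<forall>k>n. coef k t = 0)"

lemma fil_expand: "fil n t \<Longrightarrow> t = (\<Sum>k<Suc n. coef k t * x ^ k)"
proof -
  assume f: "fil n t"
  obtain m where m: "\<forall>m'\<ge>m. isrep (\<lambda>i. coef i t) m' t" using coef_expand by blast
  have "t = (\<Sum>k<max m (Suc n). coef k t * x ^ k)" using m unfolding isrep_def by auto
  also have "\<dots> = (\<Sum>k<Suc n. coef k t * x ^ k)"
    using f unfolding fil_def by (intro sum.mono_neutral_right) auto
  finally show ?thesis .
qed

end


context setting begin

lemma coef_mult_x: "coef i (t * x) = (if i = 0 then 0 else coef (i - 1) t)"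
proof -
  obtain n where n: "isrep (\<lambda>i. coef i t) n t" using coef_isrep by blast
  have "t * x = (\<Sum>k<n. coef k t * x ^ k) * x" using n unfolding isrep_def by metis
  also have "\<dots> = (\<Sum>k<n. coef k t * x ^ Suc k)"
    by (simp add: sum_distrib_right mult.assoc power_commutes)
  also have "\<dots> = (\<Sum>k<Suc n. (if k = 0 then 0 else coef (k - 1) t) * x ^ k)"
    by (subst sum.lessThan_Suc_shift) simp
  finally have "isrep (\<lambda>k. if k = 0 then 0 else coef (k - 1) t) (Suc n) (t * x)"
    using n unfolding isrep_def by auto
  then show ?thesis by (rule coef_eq)
qed

lemma coef_mult_xpow: "coef i (t * x ^ j) = (if j \<le> i then coef (i - j) t else 0)"
proof (induction j arbitrary: i)
  case 0 then show ?case by simp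
next
  case (Suc j)
  have "t * x ^ Suc j = (t * x ^ j) * x" by (simp add: mult.assoc power_commutes)
  then show ?case by (cases i) (auto simp: coef_mult_x Suc)
qed

lemma isrep_map:
  assumes n: "isrep c n t" and f: "\<And>a. a \<in> R \<Longrightarrow> f a \<in> R" and f0: "f 0 = 0"
  shows "isrep (\<lambda>k. f (c k)) n (\<Sum>k<n. f (c k) * x ^ k)"
  using n f f0 unfolding isrep_def by auto

lemma coef_x_mult: "coef i (x * t) = (if i = 0 then 0 else \<sigma> (coef (i - 1) t)) + \<delta> (coef i t)"
proof -
  obtain n where n: "isrep (\<lambda>i. coef i t) n t" using coef_isrep by blast
  have "x * t = x * (\<Sum>k<n. coef k t * x ^ k)" using n unfolding isrep_def by metis
  also have "\<dots> = (\<Sum>k<n. (\<sigma> (coef k t) * x + \<delta> (coef k t)) * x ^ k)"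
    by (simp add: sum_distrib_left mult.assoc[symmetric] skew coef_R)
  also have "\<dots> = (\<Sum>k<n. \<sigma> (coef k t) * x ^ k) * x + (\<Sum>k<n. \<delta> (coef k t) * x ^ k)"
    by (simp add: sum_distrib_right distrib_right sum.distrib mult.assoc power_commutes)
  finally have e: "x * t = \<dots>" .
  have s: "coef j (\<Sum>k<n. \<sigma> (coef k t) * x ^ k) = \<sigma> (coef j t)" for j
    by (rule coef_eq[OF isrep_map[OF n]]) (auto simp: sig_R)
  have d: "coef j (\<Sum>k<n. \<delta> (coef k t) * x ^ k) = \<delta> (coef j t)" for j
    by (rule coef_eq[OF isrep_map[OF n]]) (auto simp: del_R)
  show ?thesis unfolding e coef_add coef_mult_x s d by simp
qed

lemma fil_def2: "fil n t \<longleftrightarrow> (\<forall>k>n. coef k t = 0)" by (simp add: fil_def)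

lemma sig_pow_R: "a \<in> R \<Longrightarrow> (\<sigma> ^^ i) a \<in> R"
  by (induction i) (auto simp: sig_R)
lemma sig_pow_zero[simp]: "(\<sigma> ^^ i) 0 = 0"
  by (induction i) auto
lemma sig_pow_add: "a \<in> R \<Longrightarrow> b \<in> R \<Longrightarrow> (\<sigma> ^^ i) (a + b) = (\<sigma> ^^ i) a + (\<sigma> ^^ i) b"
  by (induction i) (auto simp: sig_add sig_pow_R)
lemma sig_pow_mult: "a \<in> R \<Longrightarrow> b \<in> R \<Longrightarrow> (\<sigma> ^^ i) (a * b) = (\<sigma> ^^ i) a * (\<sigma> ^^ i) b"
  by (induction i) (auto simp: sig_mult sig_pow_R)
lemma sig_pow_sc: "a \<in> R \<Longrightarrow> (\<sigma> ^^ i) (sc k a) = sc k ((\<sigma> ^^ i) a)"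
  by (induction i) (auto simp: sig_sc sig_pow_R)

lemma fil_x_mult: "fil m t \<Longrightarrow> fil (Suc m) (x * t) \<and> coef (Suc m) (x * t) = \<sigma> (coef m t)"
  unfolding fil_def by (auto simp: coef_x_mult)

lemma fil_xpow_mult: "fil m t \<Longrightarrow> fil (m + i) (x ^ i * t) \<and> coef (m + i) (x ^ i * t) = (\<sigma> ^^ i) (coef m t)"
proof (induction i)
  case 0 then show ?case by simp
next
  case (Suc i)
  have "x ^ Suc i * t = x * (x ^ i * t)" by (simp add: mult.assoc)
  then show ?case using fil_x_mult[of "m + i" "x ^ i * t"] Suc by auto
qed

lemma fil_mono: "fil m t \<Longrightarrow> m \<le> n \<Longrightarrow> fil n t" unfolding fil_def by auto

lemma fil_prod:
  assumes t: "fil m t" and t': "fil n t'"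
  shows "fil (m + n) (t * t') \<and> coef (m + n) (t * t') = coef m t * (\<sigma> ^^ m) (coef n t')"
proof -
  have e: "t * t' = (\<Sum>i<Suc m. coef i t * (x ^ i * t'))"
    by (subst fil_expand[OF t]) (simp only: sum_distrib_right mult.assoc)
  have c: "coef k (t * t') = (\<Sum>i<Suc m. coef i t * coef k (x ^ i * t'))" for k
    unfolding e coef_sum by (simp add: coef_left coef_R)
  have z: "coef k (x ^ i * t') = 0" if "k > n + i" for k i
    using fil_xpow_mult[OF t', of i] that unfolding fil_def by auto
  have "fil (m + n) (t * t')" unfolding fil_def c using z by (auto intro!: sum.neutral)
  moreover have "coef (m + n) (t * t') = coef m t * coef (m + n) (x ^ m * t')"
    unfolding c by (simp add: z)
  ultimately show ?thesis using fil_xpow_mult[OF t', of m] by (simp add: add.commute)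
qed

lemma fil_monom: "r \<in> R \<Longrightarrow> fil j (r * x ^ j)"
  unfolding fil_def by (simp add: coef_monom)
lemma fil_R: "r \<in> R \<Longrightarrow> fil 0 r"
  unfolding fil_def by (simp add: coef_R_elem)
lemma coef_xpow: "coef i (x ^ j) = (if i = j then 1 else 0)"
  using coef_monom[of 1 i j] by simp

end


lemma bilin_eq:
  assumes V: "Vector_Spaces.vector_space s"
    and Fl1: "\<And>b. b \<in> module.span s B \<Longrightarrow> Vector_Spaces.linear s s (\<lambda>a. F a b)"
    and Fl2: "\<And>a. a \<in> B \<Longrightarrow> Vector_Spaces.linear s s (F a)"
    and Gl1: "\<And>b. b \<in> module.span s B \<Longrightarrow> Vector_Spaces.linear s s (\<lambda>a. G a b)"
    and Gl2: "\<And>a. a \<in> B \<Longrightarrow> Vector_Spaces.linear s s (G a)"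
    and eq: "\<And>a b. a \<in> B \<Longrightarrow> b \<in> B \<Longrightarrow> F a b = G a b"
    and a: "a \<in> module.span s B" and b: "b \<in> module.span s B"
  shows "F a b = G a b"
proof -
  interpret p: vector_space_pair s s using vsp[OF V V] .
  have "F a' b = G a' b" if "a' \<in> B" for a'
    using p.linear_eq_on[OF Fl2[OF that] Gl2[OF that] b] eq that by blast
  then show ?thesis using p.linear_eq_on[OF Fl1[OF b] Gl1[OF b] a] by blast
qed

context setting begin

interpretation T: vector_space sc by (rule VT)
interpretation U: vector_space scU by (rule VU)

abbreviation "A \<equiv> tensor_sub scU tens R"

lemma tmap_ex:
  assumes "Vector_Spaces.linear sc sc f" "Vector_Spaces.linear sc sc g"
  shows "\<exists>L. Vector_Spaces.linear scU scU L \<and> (\<forall>v w. L (tens v w) = tens (f v) (g w))"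
proof (rule tensor_lift[OF TT VU])
  show "Vector_Spaces.linear sc scU (\<lambda>v. tens (f v) (g w))" for w
    using Vector_Spaces.linear_compose[OF assms(1) tens_lin1[of "g w"]] by (simp add: comp_def)
  show "Vector_Spaces.linear sc scU (\<lambda>w. tens (f v) (g w))" for v
    using Vector_Spaces.linear_compose[OF assms(2) tens_lin2[of "f v"]] by (simp add: comp_def)
qed

definition tmap :: "('t \<Rightarrow> 't) \<Rightarrow> ('t \<Rightarrow> 't) \<Rightarrow> 'u \<Rightarrow> 'u" where
  "tmap f g = (SOME L. Vector_Spaces.linear scU scU L \<and> (\<forall>v w. L (tens v w) = tens (f v) (g w)))"

lemma tmap:
  assumes "Vector_Spaces.linear sc sc f" "Vector_Spaces.linear sc sc g"
  shows "Vector_Spaces.linear scU scU (tmap f g)" "tmap f g (tens v w) = tens (f v) (g w)"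
  using someI_ex[OF tmap_ex[OF assms]] unfolding tmap_def by blast+

lemma linU_add: "Vector_Spaces.linear scU scU L \<Longrightarrow> L (a + b) = L a + L b"
  by (simp add: Vector_Spaces.linear_iff)
lemma linU_sc: "Vector_Spaces.linear scU scU L \<Longrightarrow> L (scU c a) = scU c (L a)"
  by (simp add: Vector_Spaces.linear_iff)
lemma linU_zero: "Vector_Spaces.linear scU scU L \<Longrightarrow> L 0 = 0"
  using linU_add[of L 0 0] by simp
lemma linU_sum: "Vector_Spaces.linear scU scU L \<Longrightarrow> L (\<Sum>i\<in>I. f i) = (\<Sum>i\<in>I. L (f i))"
  by (induction I rule: infinite_finite_induct) (auto simp: linU_add linU_zero)

lemma linU_multR: "Vector_Spaces.linear scU scU (\<lambda>X. X * Y)"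
  by (rule Vector_Spaces.linear_iff[THEN iffD2]) (auto simp: VU distrib_right scU_mult(1)[symmetric])
lemma linU_multL: "Vector_Spaces.linear scU scU (\<lambda>Y. X * Y)"
  by (rule Vector_Spaces.linear_iff[THEN iffD2]) (auto simp: VU distrib_left scU_mult(2)[symmetric])
lemma linU_comp: "Vector_Spaces.linear scU scU f \<Longrightarrow> Vector_Spaces.linear scU scU g \<Longrightarrow>
   Vector_Spaces.linear scU scU (\<lambda>a. g (f a))"
  using Vector_Spaces.linear_compose[of scU scU f scU g] by (simp add: comp_def)

lemma linT_sigcoef: "Vector_Spaces.linear sc sc (\<lambda>t. (\<sigma> ^^ i) (coef 0 t))"
  by (rule Vector_Spaces.linear_iff[THEN iffD2])
     (auto simp: VT coef_add coef_sc sig_pow_add sig_pow_sc coef_R)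

lemma A_gen: "r \<in> R \<Longrightarrow> s \<in> R \<Longrightarrow> tens r s \<in> A"
  unfolding tensor_sub_def by (rule U.span_base) auto
lemma A_zero: "0 \<in> A" unfolding tensor_sub_def by (rule U.span_zero)
lemma A_add: "a \<in> A \<Longrightarrow> b \<in> A \<Longrightarrow> a + b \<in> A" unfolding tensor_sub_def by (rule U.span_add)
lemma A_sc: "a \<in> A \<Longrightarrow> scU c a \<in> A" unfolding tensor_sub_def by (rule U.span_scale)
lemma A_one: "1 \<in> A" using A_gen[of 1 1] tens_one by simp

lemma span_UNIV_tens: "module.span scU (case_prod tens ` UNIV) = UNIV"
  using TT unfolding is_tensor_def by blast

lemma A_induct[consumes 1, case_names zero step]:
  assumes "a \<in> A" "P 0" "\<And>c r s y. r \<in> R \<Longrightarrow> s \<in> R \<Longrightarrow> P y \<Longrightarrow> P (scU c (tens r s) + y)"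
  shows "P a"
  using assms(1) unfolding tensor_sub_def
  by (induction rule: U.span_induct_alt) (use assms(2,3) in auto)

lemma U_induct[case_names zero step]:
  assumes "P 0" "\<And>c v w y. P y \<Longrightarrow> P (scU c (tens v w) + y)"
  shows "P u"
proof -
  have "u \<in> module.span scU (case_prod tens ` UNIV)" using span_UNIV_tens by simp
  then show ?thesis by (induction rule: U.span_induct_alt) (use assms in auto)
qed

lemma lin_into_A:
  assumes "Vector_Spaces.linear scU scU L" "\<And>v w. L (tens v w) \<in> A"
  shows "L u \<in> A"
  by (induction u rule: U_induct) (auto simp: assms linU_add linU_sc linU_zero A_zero A_add A_sc)

lemma A_mult: assumes "a \<in> A" "b \<in> A" shows "a * b \<in> A"
  using assms(1)
proof (induction a rule: A_induct)
  case zero then show ?case by (simp add: A_zero)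
next
  case (step c r s y)
  have "tens r s * b \<in> A" using assms(2)
  proof (induction b rule: A_induct)
    case zero then show ?case by (simp add: A_zero)
  next
    case (step c' r' s' y')
    then show ?case using \<open>r \<in> R\<close> \<open>s \<in> R\<close>
      by (auto simp: distrib_left scU_mult(2)[symmetric] tens_mult intro!: A_add A_sc A_gen R_mult)
  qed
  then show ?case using step by (auto simp: distrib_right scU_mult(1)[symmetric] intro!: A_add A_sc)
qed

definition kap :: "nat \<times> nat \<Rightarrow> 'u \<Rightarrow> 'u" where
  "kap p = tmap (coef (fst p)) (coef (snd p))"

lemma kap_lin: "Vector_Spaces.linear scU scU (kap p)"
  unfolding kap_def by (rule tmap(1)[OF coef_lin coef_lin])
lemma kap_tens: "kap p (tens v w) = tens (coef (fst p) v) (coef (snd p) w)"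
  unfolding kap_def by (rule tmap(2)[OF coef_lin coef_lin])
lemma kap_A: "kap p u \<in> A"
  by (rule lin_into_A[OF kap_lin]) (auto simp: kap_tens coef_R A_gen)

definition M :: "'u \<Rightarrow> nat \<times> nat \<Rightarrow> 'u" where
  "M a p = a * tens (x ^ fst p) (x ^ snd p)"

lemma M_zero[simp]: "M 0 p = 0" by (simp add: M_def)
lemma M_lin: "Vector_Spaces.linear scU scU (\<lambda>a. M a p)"
  unfolding M_def by (rule linU_multR)

abbreviation "SQ N \<equiv> {..<N} \<times> {..<N}"

definition expo :: "nat \<Rightarrow> 'u \<Rightarrow> bool" where
  "expo N u \<longleftrightarrow> (\<forall>p. N \<le> fst p \<or> N \<le> snd p \<longrightarrow> kap p u = 0) \<and> u = (\<Sum>p\<in>SQ N. M (kap p u) p)"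

lemma expo_mono: "expo N u \<Longrightarrow> N \<le> N' \<Longrightarrow> expo N' u"
proof -
  assume a: "expo N u" "N \<le> N'"
  have "(\<Sum>p\<in>SQ N. M (kap p u) p) = (\<Sum>p\<in>SQ N'. M (kap p u) p)"
  proof (intro sum.mono_neutral_left)
    show "SQ N \<subseteq> SQ N'" using a by auto
    show "\<forall>p\<in>SQ N' - SQ N. M (kap p u) p = 0"
    proof
      fix p assume "p \<in> SQ N' - SQ N"
      then have "N \<le> fst p \<or> N \<le> snd p" by (cases p) auto
      then show "M (kap p u) p = 0" using a unfolding expo_def by (metis M_zero)
    qed
  qed auto
  then show ?thesis using a unfolding expo_def by auto
qed

lemma fil_exists: "\<exists>n. fil n t"
proof -
  obtain n where "isrep (\<lambda>i. coef i t) n t" using coef_isrep by blast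
  then have "fil n t" unfolding isrep_def fil_def by auto
  then show ?thesis by blast
qed

lemma expo_tens: "\<exists>N. expo N (tens v w)"
proof -
  obtain n1 n2 where f: "fil n1 v" "fil n2 w" using fil_exists by blast
  define N where "N = Suc (max n1 n2)"
  have f': "fil (N - 1) v" "fil (N - 1) w" using f fil_mono unfolding N_def by auto
  have ev: "v = (\<Sum>i<N. coef i v * x ^ i)" "w = (\<Sum>i<N. coef i w * x ^ i)"
    using fil_expand[OF f'(1)] fil_expand[OF f'(2)] unfolding N_def by auto
  have "tens v w = tens (\<Sum>i<N. coef i v * x ^ i) (\<Sum>i<N. coef i w * x ^ i)"
    by (rule arg_cong2[where f=tens]; fact)
  also have "\<dots> = (\<Sum>i<N. \<Sum>j<N. tens (coef i v * x ^ i) (coef j w * x ^ j))"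
    by (simp only: tens_sum1, simp only: tens_sum2)
  also have "\<dots> = (\<Sum>p\<in>SQ N. M (kap p (tens v w)) p)"
    by (simp add: sum.cartesian_product M_def kap_tens tens_mult case_prod_beta)
  finally have e: "tens v w = \<dots>" .
  have "kap p (tens v w) = 0" if "N \<le> fst p \<or> N \<le> snd p" for p
  proof -
    have "N - 1 < fst p \<or> N - 1 < snd p" using that unfolding N_def by auto
    then have "coef (fst p) v = 0 \<or> coef (snd p) w = 0" using f' unfolding fil_def by blast
    then show ?thesis by (auto simp: kap_tens)
  qed
  then show ?thesis using e unfolding expo_def by blast
qed

lemma expo_ex: "\<exists>N. expo N u"
proof (induction u rule: U_induct)
  case zero
  have "expo 0 0" unfolding expo_def by (simp add: linU_zero[OF kap_lin])
  then show ?case by blast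
next
  case (step c v w y)
  obtain N1 where N1: "expo N1 (tens v w)" using expo_tens by blast
  obtain N2 where N2: "expo N2 y" using step by blast
  define N where "N = max N1 N2"
  have e1: "expo N (tens v w)" "expo N y" using expo_mono N1 N2 unfolding N_def by auto
  let ?u = "scU c (tens v w) + y"
  have k: "kap p ?u = scU c (kap p (tens v w)) + kap p y" for p
    by (simp add: linU_add[OF kap_lin] linU_sc[OF kap_lin])
  have Mk: "M (kap p ?u) p = scU c (M (kap p (tens v w)) p) + M (kap p y) p" for p
    unfolding k by (simp add: linU_add[OF M_lin] linU_sc[OF M_lin])
  have "?u = scU c (\<Sum>p\<in>SQ N. M (kap p (tens v w)) p) + (\<Sum>p\<in>SQ N. M (kap p y) p)"
    using e1 unfolding expo_def by auto
  also have "\<dots> = (\<Sum>p\<in>SQ N. M (kap p ?u) p)"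
    unfolding Mk by (simp add: sum.distrib U.scale_sum_right)
  finally have "expo N ?u" using e1 unfolding expo_def k by auto
  then show ?case by blast
qed

lemma kap_M: "a \<in> A \<Longrightarrow> kap q (M a p) = (if q = p then a else 0)"
proof (induction a rule: A_induct)
  case zero then show ?case by (simp add: linU_zero[OF kap_lin])
next
  case (step c r s y)
  have "M (scU c (tens r s) + y) p = scU c (tens (r * x ^ fst p) (s * x ^ snd p)) + M y p"
    by (simp add: M_def distrib_right scU_mult(1)[symmetric] tens_mult)
  then show ?case using step
    by (auto simp: linU_add[OF kap_lin] linU_sc[OF kap_lin] kap_tens coef_monom prod_eq_iff)
qed

lemma kap_A_elem: "a \<in> A \<Longrightarrow> kap q a = (if q = (0, 0) then a else 0)"
  using kap_M[of a q "(0,0)"] by (simp add: M_def tens_one)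

end


context setting begin

interpretation T: vector_space sc by (rule VT)
interpretation U: vector_space scU by (rule VU)

definition tw :: "nat \<times> nat \<Rightarrow> 'u \<Rightarrow> 'u" where
  "tw p = tmap (\<lambda>t. (\<sigma> ^^ fst p) (coef 0 t)) (\<lambda>t. (\<sigma> ^^ snd p) (coef 0 t))"

lemma tw_lin: "Vector_Spaces.linear scU scU (tw p)"
  unfolding tw_def by (rule tmap(1)[OF linT_sigcoef linT_sigcoef])
lemma tw_tens: "tw p (tens v w) = tens ((\<sigma> ^^ fst p) (coef 0 v)) ((\<sigma> ^^ snd p) (coef 0 w))"
  unfolding tw_def by (rule tmap(2)[OF linT_sigcoef linT_sigcoef])
lemma tw_tensR: "r \<in> R \<Longrightarrow> s \<in> R \<Longrightarrow> tw p (tens r s) = tens ((\<sigma> ^^ fst p) r) ((\<sigma> ^^ snd p) s)"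
  by (simp add: tw_tens coef_R_elem)
lemma tw_A: "tw p u \<in> A"
  by (rule lin_into_A[OF tw_lin]) (auto simp: tw_tens coef_R A_gen sig_pow_R)

definition sinv where "sinv = the_inv_into R \<sigma>"
lemma sig_inj: "inj_on \<sigma> R" using sig_bij bij_betw_def by blast
lemma sinv_R: "a \<in> R \<Longrightarrow> sinv a \<in> R"
  unfolding sinv_def using sig_bij by (metis bij_betw_def the_inv_into_into subset_refl)
lemma sinv_sig: "a \<in> R \<Longrightarrow> sinv (\<sigma> a) = a"
  unfolding sinv_def using the_inv_into_f_f[OF sig_inj] by blast
lemma sig_sinv: "a \<in> R \<Longrightarrow> \<sigma> (sinv a) = a"
  unfolding sinv_def using sig_bij by (metis bij_betw_def f_the_inv_into_f)
lemma sinv_add: assumes "a \<in> R" "b \<in> R" shows "sinv (a + b) = sinv a + sinv b"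
proof -
  have "a + b = \<sigma> (sinv a + sinv b)" using assms by (simp add: sig_add sinv_R sig_sinv)
  then show ?thesis using assms by (simp add: sinv_sig R_add sinv_R)
qed
lemma sinv_sc: assumes "a \<in> R" shows "sinv (sc k a) = sc k (sinv a)"
proof -
  have "sc k a = \<sigma> (sc k (sinv a))" using assms by (simp add: sig_sc sinv_R sig_sinv)
  then show ?thesis using assms by (simp add: sinv_sig R_sc sinv_R)
qed
lemma sinv_pow_R: "a \<in> R \<Longrightarrow> (sinv ^^ i) a \<in> R"
  by (induction i) (auto simp: sinv_R)
lemma sinv_pow_add: "a \<in> R \<Longrightarrow> b \<in> R \<Longrightarrow> (sinv ^^ i) (a + b) = (sinv ^^ i) a + (sinv ^^ i) b"
  by (induction i) (auto simp: sinv_add sinv_pow_R)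
lemma sinv_pow_sc: "a \<in> R \<Longrightarrow> (sinv ^^ i) (sc k a) = sc k ((sinv ^^ i) a)"
  by (induction i) (auto simp: sinv_sc sinv_pow_R)
lemma sinv_sig_pow: "a \<in> R \<Longrightarrow> (sinv ^^ i) ((\<sigma> ^^ i) a) = a"
proof (induction i arbitrary: a)
  case 0 then show ?case by simp
next
  case (Suc i)
  have e1: "(\<sigma> ^^ Suc i) a = \<sigma> ((\<sigma> ^^ i) a)" by simp
  have e2: "(sinv ^^ Suc i) z = (sinv ^^ i) (sinv z)" for z by (simp add: funpow_swap1)
  have "(sinv ^^ Suc i) ((\<sigma> ^^ Suc i) a) = (sinv ^^ i) (sinv (\<sigma> ((\<sigma> ^^ i) a)))"
    unfolding e1 e2 ..
  also have "\<dots> = a" using Suc by (simp add: sinv_sig sig_pow_R)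
  finally show ?case .
qed

lemma linT_sinvcoef: "Vector_Spaces.linear sc sc (\<lambda>t. (sinv ^^ i) (coef 0 t))"
  by (rule Vector_Spaces.linear_iff[THEN iffD2])
     (auto simp: VT coef_add coef_sc sinv_pow_add sinv_pow_sc coef_R)

lemma tw_inj: assumes a: "a \<in> A" and z: "tw p a = 0" shows "a = 0"
proof -
  define L where "L = tmap (\<lambda>t. (sinv ^^ fst p) (coef 0 t)) (\<lambda>t. (sinv ^^ snd p) (coef 0 t))"
  have L1: "Vector_Spaces.linear scU scU L"
    unfolding L_def by (rule tmap(1)[OF linT_sinvcoef linT_sinvcoef])
  have L2: "L (tens v w) = tens ((sinv ^^ fst p) (coef 0 v)) ((sinv ^^ snd p) (coef 0 w))" for v w
    unfolding L_def by (rule tmap(2)[OF linT_sinvcoef linT_sinvcoef])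
  note L = L1 L2
  interpret pp: vector_space_pair scU scU using vsp[OF VU VU] .
  have "L (tw p a) = id a"
  proof (rule pp.linear_eq_on[where B="case_prod tens ` (R \<times> R)" and f="\<lambda>a. L (tw p a)" and g=id and x=a])
    show "Vector_Spaces.linear scU scU (\<lambda>a. L (tw p a))" by (rule linU_comp[OF tw_lin L(1)])
    show "Vector_Spaces.linear scU scU id" by (rule U.linear_id)
    show "a \<in> module.span scU (case_prod tens ` (R \<times> R))" using a unfolding tensor_sub_def .
    show "L (tw p b) = id b" if "b \<in> case_prod tens ` (R \<times> R)" for b
      using that by (auto simp: tw_tensR L(2) coef_R_elem sig_pow_R sinv_sig_pow)
  qed
  then show ?thesis using z linU_zero[OF L(1)] by simp
qed

lemma lin_zero_fun: "Vector_Spaces.linear scU scU (\<lambda>_. 0)"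
  by (rule Vector_Spaces.linear_iff[THEN iffD2]) (auto simp: VU)

definition padd :: "nat \<times> nat \<Rightarrow> nat \<times> nat \<Rightarrow> nat \<times> nat" where
  "padd p q = (fst p + fst q, snd p + snd q)"
definition cw :: "nat \<times> nat \<Rightarrow> nat \<times> nat \<Rightarrow> bool" where
  "cw p q \<longleftrightarrow> fst p \<le> fst q \<and> snd p \<le> snd q"

lemma mm:
  assumes a: "a \<in> A" and b: "b \<in> A"
  shows "\<not> cw q (padd p p') \<Longrightarrow> kap q (M a p * M b p') = 0"
    and "kap (padd p p') (M a p * M b p') = a * tw p b"
proof -
  let ?B = "case_prod tens ` (R \<times> R)"
  have aB: "a \<in> module.span scU ?B" "b \<in> module.span scU ?B" using a b unfolding tensor_sub_def by auto
  have l1: "Vector_Spaces.linear scU scU (\<lambda>a. kap r (M a p * Y))" for r Y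
    by (intro linU_comp[OF M_lin] linU_comp[OF linU_multR kap_lin])
  have l2: "Vector_Spaces.linear scU scU (\<lambda>b. kap r (X * M b p'))" for r X
    by (intro linU_comp[OF M_lin] linU_comp[OF linU_multL kap_lin])
  have l3: "Vector_Spaces.linear scU scU (\<lambda>a. a * tw p Y)" for Y by (rule linU_multR)
  have l4: "Vector_Spaces.linear scU scU (\<lambda>b. X * tw p b)" for X by (intro linU_comp[OF tw_lin linU_multL])
  have pure: "M (tens r s) p * M (tens r' s') p' =
      tens ((r * x ^ fst p) * (r' * x ^ fst p')) ((s * x ^ snd p) * (s' * x ^ snd p'))" for r s r' s'
    by (simp add: M_def tens_mult mult.assoc)
  have fp1: "fil (fst p + fst p') ((r * x ^ fst p) * (r' * x ^ fst p')) \<and>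
      coef (fst p + fst p') ((r * x ^ fst p) * (r' * x ^ fst p')) = r * (\<sigma> ^^ fst p) r'"
    if "r \<in> R" "r' \<in> R" for r r'
    using fil_prod[OF fil_monom[OF that(1)] fil_monom[OF that(2)]] that by (simp add: coef_monom)
  have fp2: "fil (snd p + snd p') ((r * x ^ snd p) * (r' * x ^ snd p')) \<and>
      coef (snd p + snd p') ((r * x ^ snd p) * (r' * x ^ snd p')) = r * (\<sigma> ^^ snd p) r'"
    if "r \<in> R" "r' \<in> R" for r r'
    using fil_prod[OF fil_monom[OF that(1)] fil_monom[OF that(2)]] that by (simp add: coef_monom)
  show "\<not> cw q (padd p p') \<Longrightarrow> kap q (M a p * M b p') = 0"
  proof -
    assume nq: "\<not> cw q (padd p p')"
    show ?thesis
    proof (rule bilin_eq[OF VU _ _ _ _ _ aB, where G="\<lambda>_ _. 0"])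
      show "Vector_Spaces.linear scU scU (\<lambda>a. kap q (M a p * M b p'))" for b by (rule l1)
      show "Vector_Spaces.linear scU scU (\<lambda>b. kap q (M a p * M b p'))" for a by (rule l2)
      show "Vector_Spaces.linear scU scU (\<lambda>a. 0)" for b :: 'u by (rule lin_zero_fun)
      show "Vector_Spaces.linear scU scU (\<lambda>b. 0)" for a :: 'u by (rule lin_zero_fun)
      fix a b assume "a \<in> ?B" "b \<in> ?B"
      then obtain r s r' s' where rs: "r \<in> R" "s \<in> R" "r' \<in> R" "s' \<in> R" "a = tens r s" "b = tens r' s'"
        by auto
      have "fst q > fst p + fst p' \<or> snd q > snd p + snd p'" using nq unfolding cw_def padd_def by auto
      then show "kap q (M a p * M b p') = 0"
        using fp1[OF rs(1,3)] fp2[OF rs(2,4)] unfolding rs(5,6) pure kap_tens fil_def by auto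
    qed
  qed
  show "kap (padd p p') (M a p * M b p') = a * tw p b"
  proof (rule bilin_eq[OF VU _ _ _ _ _ aB, where G="\<lambda>a b. a * tw p b"])
    show "Vector_Spaces.linear scU scU (\<lambda>a. kap (padd p p') (M a p * M b p'))" for b by (rule l1)
    show "Vector_Spaces.linear scU scU (\<lambda>b. kap (padd p p') (M a p * M b p'))" for a by (rule l2)
    show "Vector_Spaces.linear scU scU (\<lambda>a. a * tw p b)" for b by (rule l3)
    show "Vector_Spaces.linear scU scU (\<lambda>b. a * tw p b)" for a by (rule l4)
    fix a b assume "a \<in> ?B" "b \<in> ?B"
    then obtain r s r' s' where rs: "r \<in> R" "s \<in> R" "r' \<in> R" "s' \<in> R" "a = tens r s" "b = tens r' s'"
      by auto
    show "kap (padd p p') (M a p * M b p') = a * tw p b"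
      using fp1[OF rs(1,3)] fp2[OF rs(2,4)] unfolding rs(5,6) pure kap_tens padd_def
      by (simp add: tw_tensR rs tens_mult)
  qed
qed

end


definition kless :: "bool \<Rightarrow> nat \<times> nat \<Rightarrow> nat \<times> nat \<Rightarrow> bool" where
  "kless b p q \<longleftrightarrow> (if b then snd p < snd q \<or> (snd p = snd q \<and> fst p < fst q)
                           else fst p < fst q \<or> (fst p = fst q \<and> snd p < snd q))"

lemma kl_irrefl: "\<not> kless b p p" unfolding kless_def by auto
lemma kl_trans: "kless b p q \<Longrightarrow> kless b q r \<Longrightarrow> kless b p r" unfolding kless_def by (auto split: if_splits)
lemma kl_total: "p \<noteq> q \<Longrightarrow> kless b p q \<or> kless b q p"
  unfolding kless_def by (cases p; cases q) (auto split: if_splits)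
lemma kl_asym: "kless b p q \<Longrightarrow> \<not> kless b q p" unfolding kless_def by (auto split: if_splits)

context setting begin

lemma kl_cw: "cw p q \<Longrightarrow> p = q \<or> kless b p q"
  unfolding kless_def cw_def by (cases p; cases q) auto
lemma kl_add_le: "\<not> kless b m p \<Longrightarrow> \<not> kless b n q \<Longrightarrow> \<not> kless b (padd m n) (padd p q)"
  unfolding kless_def padd_def by (auto split: if_splits)
lemma kl_add_lt: "\<not> kless b m p \<Longrightarrow> \<not> kless b n q \<Longrightarrow> p \<noteq> m \<or> q \<noteq> n \<Longrightarrow> kless b (padd p q) (padd m n)"
  unfolding kless_def padd_def by (cases p; cases q; cases m; cases n) (auto split: if_splits)

definition UB :: "bool \<Rightarrow> 'u \<Rightarrow> nat \<times> nat \<Rightarrow> bool" where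
  "UB b u m \<longleftrightarrow> (\<forall>r. kless b m r \<longrightarrow> kap r u = 0)"

lemma kap_zero[simp]: "kap r 0 = 0" by (rule linU_zero[OF kap_lin])
lemma term_zero: "kap p u = 0 \<or> kap p' v = 0 \<Longrightarrow> kap r (M (kap p u) p * M (kap p' v) p') = 0"
  by auto

lemma UB_prod:
  assumes u: "UB b u m" and v: "UB b v n"
  shows "UB b (u * v) (padd m n) \<and> kap (padd m n) (u * v) = kap m u * tw m (kap n v)"
proof -
  obtain N1 where N1: "expo N1 u" using expo_ex by blast
  obtain N2 where N2: "expo N2 v" using expo_ex by blast
  define N where "N = Suc (max (max N1 N2) (max (max (fst m) (snd m)) (max (fst n) (snd n))))"
  have e: "expo N u" "expo N v" using expo_mono[OF N1] expo_mono[OF N2] unfolding N_def by auto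
  have mn: "m \<in> SQ N" "n \<in> SQ N" unfolding N_def by (cases m; cases n; auto)+
  define F where "F p p' = M (kap p u) p * M (kap p' v) p'" for p p'
  have eu: "u = (\<Sum>p\<in>SQ N. M (kap p u) p)" using e(1) unfolding expo_def by (rule conjunct2)
  have ev: "v = (\<Sum>p\<in>SQ N. M (kap p v) p)" using e(2) unfolding expo_def by (rule conjunct2)
  have "u * v = (\<Sum>p\<in>SQ N. M (kap p u) p) * (\<Sum>p\<in>SQ N. M (kap p v) p)"
    using arg_cong2[OF eu ev, of "(*)"] .
  also have "\<dots> = (\<Sum>p\<in>SQ N. \<Sum>p'\<in>SQ N. F p p')" unfolding F_def by (rule sum_product)
  finally have uv: "u * v = (\<Sum>p\<in>SQ N. \<Sum>p'\<in>SQ N. F p p')" .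
  have kuv: "kap r (u * v) = (\<Sum>p\<in>SQ N. \<Sum>p'\<in>SQ N. kap r (F p p'))" for r
    unfolding uv by (simp add: linU_sum[OF kap_lin])
  have nz: "\<not> kless b m p \<and> \<not> kless b n p'" if "kap r (F p p') \<noteq> 0" for r p p'
  proof -
    have "kap p u \<noteq> 0" "kap p' v \<noteq> 0" using that unfolding F_def by auto
    then show ?thesis using u v unfolding UB_def by blast
  qed
  have "kap r (u * v) = 0" if r: "kless b (padd m n) r" for r
  proof -
    have "kap r (F p p') = 0" for p p'
    proof (rule ccontr)
      assume h: "kap r (F p p') \<noteq> 0"
      from nz[OF h] have "\<not> kless b (padd m n) (padd p p')" using kl_add_le by blast
      moreover have "cw r (padd p p')"
        using h mm(1)[OF kap_A kap_A] unfolding F_def by blast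
      ultimately show False using kl_cw[of r "padd p p'" b] r kl_trans[OF r, of "padd p p'"]
        by (cases "r = padd p p'") auto
    qed
    then show ?thesis unfolding kuv by simp
  qed
  moreover have "kap (padd m n) (u * v) = kap m u * tw m (kap n v)"
  proof -
    have z: "kap (padd m n) (F p p') = 0" if "(p, p') \<noteq> (m, n)" for p p'
    proof (rule ccontr)
      assume h: "kap (padd m n) (F p p') \<noteq> 0"
      from nz[OF h] that have lt: "kless b (padd p p') (padd m n)" using kl_add_lt by blast
      have "cw (padd m n) (padd p p')"
        using h mm(1)[OF kap_A kap_A] unfolding F_def by blast
      then have "padd m n = padd p p' \<or> kless b (padd m n) (padd p p')" by (rule kl_cw)
      then show False using lt kl_asym[OF lt] kl_irrefl[of b "padd m n"] by auto
    qed
    have "kap (padd m n) (u * v) = (\<Sum>z\<in>SQ N \<times> SQ N. kap (padd m n) (F (fst z) (snd z)))"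
      unfolding kuv sum.cartesian_product by (simp add: case_prod_beta)
    also have "\<dots> = (\<Sum>z\<in>SQ N \<times> SQ N. if z = (m, n) then kap (padd m n) (F m n) else 0)"
    proof (rule sum.cong[OF refl])
      fix w assume "w \<in> SQ N \<times> SQ N"
      show "kap (padd m n) (F (fst w) (snd w)) = (if w = (m, n) then kap (padd m n) (F m n) else 0)"
        using z[of "fst w" "snd w"] by (cases "w = (m, n)") auto
    qed
    also have "\<dots> = kap (padd m n) (F m n)" using mn by (simp add: sum.delta)
    also have "\<dots> = kap m u * tw m (kap n v)" unfolding F_def by (rule mm(2)[OF kap_A kap_A])
    finally show ?thesis .
  qed
  ultimately show ?thesis unfolding UB_def by blast
qed

lemma A_nz_mult: "a \<in> A \<Longrightarrow> b \<in> A \<Longrightarrow> a \<noteq> 0 \<Longrightarrow> b \<noteq> 0 \<Longrightarrow> a * b \<noteq> 0"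
  using A_domain by blast

definition psc :: "nat \<Rightarrow> nat \<times> nat \<Rightarrow> nat \<times> nat" where
  "psc k p = (k * fst p, k * snd p)"

lemma UB_one: "UB b 1 (0, 0) \<and> kap (0, 0) 1 = 1"
  using kap_A_elem[OF A_one] kl_irrefl unfolding UB_def by auto

lemma UB_pow:
  assumes u: "UB b u m" and c: "kap m u \<noteq> 0"
  shows "UB b (u ^ k) (psc k m) \<and> kap (psc k m) (u ^ k) \<noteq> 0"
proof (induction k)
  case 0 then show ?case using UB_one one_neq_zero_U by (simp add: psc_def)
next
  case (Suc k)
  have pe: "psc (Suc k) m = padd m (psc k m)" unfolding psc_def padd_def by simp
  have P: "UB b (u * u ^ k) (padd m (psc k m)) \<and>
     kap (padd m (psc k m)) (u * u ^ k) = kap m u * tw m (kap (psc k m) (u ^ k))"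
    using UB_prod[OF u Suc[THEN conjunct1]] .
  have "tw m (kap (psc k m) (u ^ k)) \<noteq> 0" using tw_inj[OF kap_A] Suc by blast
  then have "kap m u * tw m (kap (psc k m) (u ^ k)) \<noteq> 0" using A_nz_mult[OF kap_A tw_A c] by blast
  then show ?case using P pe by simp
qed

lemma UB_A: "a \<in> A \<Longrightarrow> UB b a (0, 0) \<and> kap (0, 0) a = a"
  using kap_A_elem kl_irrefl unfolding UB_def by auto

end


lemma tensor_flip:
  assumes T: "is_tensor scV scW scU tens"
  shows "is_tensor scW scV scU (\<lambda>w v. tens v w)"
proof -
  have im: "case_prod (\<lambda>w v. tens v w) ` (B \<times> A) = case_prod tens ` (A \<times> B)" for A B
    by force
  have inj: "inj_on (case_prod (\<lambda>w v. tens v w)) (B \<times> A)" if "inj_on (case_prod tens) (A \<times> B)" for A B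
    using that unfolding inj_on_def by auto
  have r: "range (case_prod (\<lambda>w v. tens v w)) = range (case_prod tens)"
    using im[of UNIV UNIV] by simp
  show ?thesis using T unfolding is_tensor_def r using im inj by metis
qed

lemma functional_left:
  fixes tens :: "'v::ab_group_add \<Rightarrow> 'w::ab_group_add \<Rightarrow> 'u::ab_group_add"
    and scV :: "'f::field \<Rightarrow> 'v \<Rightarrow> 'v"
  assumes T: "is_tensor scV scW scU tens" and u: "u \<noteq> 0"
  shows "\<exists>f L. Vector_Spaces.linear scV (*) f \<and> Vector_Spaces.linear scU scW L \<and>
           (\<forall>v w. L (tens v w) = scW (f v) w) \<and> L u \<noteq> 0"
proof -
  have V: "Vector_Spaces.vector_space scV" and W: "Vector_Spaces.vector_space scW"
    and U: "Vector_Spaces.vector_space scU"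
    and t1: "\<And>w. Vector_Spaces.linear scV scU (\<lambda>v. tens v w)"
    and t2: "\<And>v. Vector_Spaces.linear scW scU (tens v)"
    and sp: "module.span scU (case_prod tens ` UNIV) = UNIV"
    using T unfolding is_tensor_def by auto
  interpret V: vector_space scV by (rule V)
  interpret W: vector_space scW by (rule W)
  interpret U: vector_space scU by (rule U)
  have tadd1: "tens (a + b) c = tens a c + tens b c" for a b c
    using t1[of c] by (simp add: Vector_Spaces.linear_iff)
  have tsc1: "tens (scV k a) c = scU k (tens a c)" for k a c
    using t1[of c] by (simp add: Vector_Spaces.linear_iff)
  have tsc2: "tens c (scW k a) = scU k (tens c a)" for k a c
    using t2[of c] by (simp add: Vector_Spaces.linear_iff)
  have tadd2: "tens c (a + b) = tens c a + tens c b" for a b c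
    using t2[of c] by (simp add: Vector_Spaces.linear_iff)
  have t0: "tens 0 c = 0" for c using tadd1[of 0 0 c] by simp
  have t02: "tens c 0 = 0" for c using tadd2[of c 0 0] by simp
  have tsum1: "tens (\<Sum>i\<in>I. f i) c = (\<Sum>i\<in>I. tens (f i) c)" for I f c
    by (induction I rule: infinite_finite_induct) (auto simp: tadd1 t0)
  obtain B where B: "\<not> module.dependent scV B" "module.span scV B = UNIV" using basis_UNIV[OF V] by metis
  have rep: "\<exists>Bs g. finite Bs \<and> Bs \<subseteq> B \<and> z = (\<Sum>b\<in>Bs. tens b (g b))" for z
  proof -
    have "z \<in> module.span scU (case_prod tens ` UNIV)" using sp by simp
    then show ?thesis
    proof (induction rule: U.span_induct_alt)
      case base
      then show ?case by (intro exI[of _ "{}"]) auto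
    next
      case (step c z y)
      then obtain v w where z: "z = tens v w" by auto
      obtain Bs g where y: "finite Bs" "Bs \<subseteq> B" "y = (\<Sum>b\<in>Bs. tens b (g b))" using step by blast
      have "v \<in> module.span scV B" using B by simp
      then obtain t r where t: "finite t" "t \<subseteq> B" "v = (\<Sum>a\<in>t. scV (r a) a)"
        unfolding V.span_explicit by blast
      define g' where "g' b = (if b \<in> t then scW (c * r b) w else 0) + (if b \<in> Bs then g b else 0)" for b
      have "scU c z = (\<Sum>b\<in>t. tens b (scW (c * r b) w))"
        unfolding z t(3) tsum1 by (simp add: tsc1 tsc2 U.scale_sum_right U.scale_scale)
      also have "\<dots> = (\<Sum>b\<in>t \<union> Bs. tens b (if b \<in> t then scW (c * r b) w else 0))"
        using t y by (intro sum.mono_neutral_cong_left) (auto simp: t02)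
      finally have e1: "scU c z = \<dots>" .
      have "y = (\<Sum>b\<in>t \<union> Bs. tens b (if b \<in> Bs then g b else 0))"
        unfolding y(3) using t y by (intro sum.mono_neutral_cong_left) (auto simp: t02)
      then have "scU c z + y = (\<Sum>b\<in>t \<union> Bs. tens b (g' b))"
        unfolding e1 g'_def by (simp add: tadd2 sum.distrib)
      then show ?case using t y by (intro exI[of _ "t \<union> Bs"] exI[of _ g']) auto
    qed
  qed
  obtain Bs g where Bs: "finite Bs" "Bs \<subseteq> B" "u = (\<Sum>b\<in>Bs. tens b (g b))" using rep by blast
  obtain b0 where b0: "b0 \<in> Bs" "g b0 \<noteq> 0"
    using u Bs(3) by (metis (mono_tags, lifting) sum.neutral t02)
  interpret p: vector_space_pair scV "(*)" using vsp[OF V vs_field] .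
  obtain f where f: "Vector_Spaces.linear scV (*) f" "\<forall>b\<in>B. f b = (if b = b0 then 1 else 0)"
    using p.linear_independent_extend[OF B(1), of "\<lambda>b. if b = b0 then 1 else 0"] by blast
  have "\<exists>L. Vector_Spaces.linear scU scW L \<and> (\<forall>v w. L (tens v w) = scW (f v) w)"
  proof (rule tensor_lift[OF T W])
    show "Vector_Spaces.linear scV scW (\<lambda>v. scW (f v) w)" for w
      using f(1) by (simp add: Vector_Spaces.linear_iff W.scale_left_distrib V W)
    show "Vector_Spaces.linear scW scW (\<lambda>w. scW (f v) w)" for v
      by (simp add: Vector_Spaces.linear_iff W.scale_right_distrib W)
  qed
  then obtain L where L: "Vector_Spaces.linear scU scW L" "\<forall>v w. L (tens v w) = scW (f v) w" by blast
  have Ladd: "L (a + b) = L a + L b" for a b using L(1) by (simp add: Vector_Spaces.linear_iff)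
  have L0: "L 0 = 0" using Ladd[of 0 0] by simp
  have "L u = (\<Sum>b\<in>Bs. L (tens b (g b)))" unfolding Bs(3)
    by (induction Bs rule: infinite_finite_induct) (auto simp: Ladd L0)
  also have "\<dots> = (\<Sum>b\<in>Bs. if b = b0 then g b else 0)"
    using Bs(2) f(2) L(2) by (intro sum.cong) auto
  also have "\<dots> = g b0" using Bs(1) b0(1) by (simp add: sum.delta)
  finally have "L u \<noteq> 0" using b0(2) by simp
  then show ?thesis using f(1) L by blast
qed



lemma sum_list_hom:
  assumes "\<And>a b. L (a + b) = L a + L b" "L 0 = 0"
  shows "L (sum_list (map g l)) = sum_list (map (\<lambda>z. L (g z)) l)"
  by (induction l) (auto simp: assms)

lemma sum_hom:
  assumes "\<And>a b. L (a + b) = L a + L b" "L 0 = 0"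
  shows "L (\<Sum>i\<in>I. g i) = (\<Sum>i\<in>I. L (g i))"
  by (induction I rule: infinite_finite_induct) (auto simp: assms)

lemma tsum_nth: "tsum t ps = (\<Sum>i<length ps. t (fst (ps ! i)) (snd (ps ! i)))"
  unfolding tsum_def by (simp add: sum_list_sum_nth atLeast0LessThan case_prod_beta)

lemma tsum_Nil[simp]: "tsum t [] = 0" by (simp add: tsum_def)
lemma tsum_Cons[simp]: "tsum t (p # l) = t (fst p) (snd p) + tsum t l" by (simp add: tsum_def case_prod_beta)
lemma tsum_append: "tsum t (l1 @ l2) = tsum t l1 + tsum t l2" by (simp add: tsum_def)

context setting begin

interpretation T: vector_space sc by (rule VT)
interpretation U: vector_space scU by (rule VU)
interpretation W: vector_space scW by (rule VW)

lemma U_list: "\<exists>l. u = tsum tens l"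
proof (induction u rule: U_induct)
  case zero then show ?case by (intro exI[of _ "[]"]) simp
next
  case (step c v w y)
  then obtain l where "y = tsum tens l" by blast
  then show ?case by (intro exI[of _ "(sc c v, w) # l"]) (simp add: tens_sc1)
qed

lemma A_list: "a \<in> A \<Longrightarrow> \<exists>l. set l \<subseteq> R \<times> R \<and> a = tsum tens l"
proof (induction a rule: A_induct)
  case zero then show ?case by (intro exI[of _ "[]"]) simp
next
  case (step c r s y)
  then obtain l where "set l \<subseteq> R \<times> R" "y = tsum tens l" by blast
  then show ?case using step by (intro exI[of _ "(sc c r, s) # l"]) (simp add: tens_sc1 R_sc)
qed

lemma M_list: "M (tsum tens l) p = tsum tens (map (\<lambda>z. (fst z * x ^ fst p, snd z * x ^ snd p)) l)"
  by (induction l) (auto simp: M_def distrib_right tens_mult)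

lemma sum_tsum:
  assumes "finite X" "\<forall>p\<in>X. \<exists>l. set l \<subseteq> Q \<and> f p = tsum tens l"
  shows "\<exists>l. set l \<subseteq> Q \<and> sum f X = tsum tens l"
  using assms
proof (induction X rule: finite_induct)
  case empty then show ?case by (intro exI[of _ "[]"]) simp
next
  case (insert p X)
  obtain l1 where l1: "set l1 \<subseteq> Q" "f p = tsum tens l1" using insert by blast
  obtain l2 where l2: "set l2 \<subseteq> Q" "sum f X = tsum tens l2" using insert by blast
  show ?case using insert l1 l2 by (intro exI[of _ "l1 @ l2"]) (simp add: tsum_append)
qed

lemma fil_monom_le: "r \<in> R \<Longrightarrow> j \<le> D \<Longrightarrow> fil D (r * x ^ j)"
  by (rule fil_mono[OF fil_monom])

lemma bounded_rep:
  assumes b: "\<And>p. kap p u \<noteq> 0 \<Longrightarrow> fst p \<le> D1 \<and> snd p \<le> D2"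
  shows "\<exists>ps. u = tsum tens ps \<and> set ps \<subseteq> {z. fil D1 (fst z) \<and> fil D2 (snd z)}"
proof -
  obtain N where N: "expo N u" using expo_ex by blast
  let ?S = "{p \<in> SQ N. kap p u \<noteq> 0}"
  have "u = (\<Sum>p\<in>SQ N. M (kap p u) p)" using N unfolding expo_def by (rule conjunct2)
  also have "\<dots> = (\<Sum>p\<in>?S. M (kap p u) p)" by (intro sum.mono_neutral_right) auto
  finally have e: "u = \<dots>" .
  have "\<exists>l. set l \<subseteq> {z. fil D1 (fst z) \<and> fil D2 (snd z)} \<and> sum (\<lambda>p. M (kap p u) p) ?S = tsum tens l"
  proof (rule sum_tsum)
    show "finite ?S" by auto
    show "\<forall>p\<in>?S. \<exists>l. set l \<subseteq> {z. fil D1 (fst z) \<and> fil D2 (snd z)} \<and> M (kap p u) p = tsum tens l"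
    proof
      fix p assume p: "p \<in> ?S"
      obtain l where l: "set l \<subseteq> R \<times> R" "kap p u = tsum tens l" using A_list[OF kap_A] by blast
      have bd: "fst p \<le> D1" "snd p \<le> D2" using b p by auto
      have "set (map (\<lambda>z. (fst z * x ^ fst p, snd z * x ^ snd p)) l) \<subseteq> {z. fil D1 (fst z) \<and> fil D2 (snd z)}"
        using l(1) bd by (auto intro!: fil_monom_le)
      then show "\<exists>l. set l \<subseteq> {z. fil D1 (fst z) \<and> fil D2 (snd z)} \<and> M (kap p u) p = tsum tens l"
        unfolding l(2) M_list by blast
    qed
  qed
  then show ?thesis using e by metis
qed

lemma D_expand: assumes "fil d y" shows "\<Delta> y = (\<Sum>i<Suc d. \<Delta> (coef i y) * \<Delta> x ^ i)"
proof -
  have "\<Delta> y = \<Delta> (\<Sum>i<Suc d. coef i y * x ^ i)" using fil_expand[OF assms] by (rule arg_cong)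
  then show ?thesis by (simp only: D_sum D_mult D_pow)
qed

lemma key:
  assumes u: "UB b (\<Delta> x) m" and c: "kap m (\<Delta> x) \<noteq> 0"
    and d: "d = (if b then snd m else fst m)" "2 \<le> d"
    and y: "fil d y" "coef d y \<noteq> 0"
    and z: "\<forall>r. d < (if b then snd r else fst r) \<longrightarrow> kap r (\<Delta> y) = 0"
  shows False
proof -
  define r0 where "r0 = psc d m"
  have "d < (if b then snd r0 else fst r0)" using d unfolding r0_def psc_def by auto
  then have k0: "kap r0 (\<Delta> y) = 0" using z by blast
  have P: "UB b (\<Delta> (coef i y) * \<Delta> x ^ i) (padd (0, 0) (psc i m)) \<and>
     kap (padd (0, 0) (psc i m)) (\<Delta> (coef i y) * \<Delta> x ^ i) =
       \<Delta> (coef i y) * tw (0, 0) (kap (psc i m) (\<Delta> x ^ i))" for i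
    using UB_prod[OF UB_A[OF D_R[OF coef_R], THEN conjunct1] UB_pow[OF u c, THEN conjunct1]]
      UB_A[OF D_R[OF coef_R]] by simp
  have pz: "padd (0, 0) p = p" for p by (simp add: padd_def)
  have lt: "kap r0 (\<Delta> (coef i y) * \<Delta> x ^ i) = 0" if "i < d" for i
  proof -
    have "kless b (psc i m) r0" using that d unfolding r0_def psc_def kless_def by auto
    then show ?thesis using P[of i] unfolding UB_def pz by blast
  qed
  have "kap r0 (\<Delta> (coef d y) * \<Delta> x ^ d) \<noteq> 0"
  proof -
    have "kap r0 (\<Delta> x ^ d) \<noteq> 0" using UB_pow[OF u c] unfolding r0_def by blast
    then have "tw (0, 0) (kap r0 (\<Delta> x ^ d)) \<noteq> 0" using tw_inj[OF kap_A] by blast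
    moreover have "\<Delta> (coef d y) \<noteq> 0" using y(2) D_inj0 by blast
    ultimately show ?thesis using P[of d] A_nz_mult[OF D_R[OF coef_R] tw_A] unfolding pz r0_def by metis
  qed
  moreover have "kap r0 (\<Delta> y) = kap r0 (\<Delta> (coef d y) * \<Delta> x ^ d)"
    unfolding D_expand[OF y(1)] sum.lessThan_Suc linU_add[OF kap_lin] linU_sum[OF kap_lin] using lt by simp
  ultimately show False using k0 by simp
qed

end


lemma max_exists: "finite X \<Longrightarrow> X \<noteq> {} \<Longrightarrow> \<exists>m\<in>X. \<forall>s\<in>X. \<not> kless b m s"
proof (induction X rule: finite_ne_induct)
  case (singleton x) then show ?case using kl_irrefl by auto
next
  case (insert x F)
  then obtain m where m: "m \<in> F" "\<forall>s\<in>F. \<not> kless b m s" by blast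
  show ?case
  proof (cases "kless b m x")
    case True
    then show ?thesis using m kl_trans kl_irrefl by (metis insert_iff)
  next
    case False
    then show ?thesis using m by auto
  qed
qed

context setting begin

interpretation T: vector_space sc by (rule VT)
interpretation U: vector_space scU by (rule VU)
interpretation W: vector_space scW by (rule VW)

lemma linTU_add: "Vector_Spaces.linear s1 s2 L \<Longrightarrow> L (a + b) = L a + L b"
  by (simp add: Vector_Spaces.linear_iff)
lemma linTU_sc: "Vector_Spaces.linear s1 s2 L \<Longrightarrow> L (s1 c a) = s2 c (L a)"
  by (simp add: Vector_Spaces.linear_iff)
lemma linTU_zero: "Vector_Spaces.linear s1 s2 L \<Longrightarrow> L 0 = 0"
  using linTU_add[of s1 s2 L 0 0] by simp

lemma qs_exists: "\<exists>qs. length qs = length ps \<and> (\<forall>i<length ps. \<Delta> (snd (ps ! i)) = tsum tens (qs ! i))"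
proof -
  define qs where "qs = map (\<lambda>z. SOME l. \<Delta> (snd z) = tsum tens l) ps"
  have "\<Delta> (snd (ps ! i)) = tsum tens (qs ! i)" if "i < length ps" for i
    using that someI_ex[OF U_list[of "\<Delta> (snd (ps ! i))"]] unfolding qs_def by auto
  then show ?thesis unfolding qs_def by (intro exI[of _ "map (\<lambda>z. SOME l. \<Delta> (snd z) = tsum tens l) ps"]) auto
qed

lemma exists_y_right:
  assumes ps: "\<Delta> x = tsum tens ps" "\<forall>z\<in>set ps. fil D (snd z)"
    and m: "kap m (\<Delta> x) \<noteq> 0" "snd m = D"
  shows "\<exists>y. fil D y \<and> coef D y \<noteq> 0 \<and> (\<forall>r. D < snd r \<longrightarrow> kap r (\<Delta> y) = 0)"
proof -
  define Cq where "Cq = tmap id (coef D)"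
  have Cq: "Vector_Spaces.linear scU scU Cq" "Cq (tens v w) = tens v (coef D w)" for v w
    unfolding Cq_def using tmap[OF T.linear_id coef_lin] by auto
  have kC: "kap (fst m, 0) (Cq u) = kap (fst m, D) u" for u
  proof (rule tensor_ext[OF TT VU, where f="\<lambda>u. kap (fst m, 0) (Cq u)" and g="kap (fst m, D)"])
    show "Vector_Spaces.linear scU scU (\<lambda>u. kap (fst m, 0) (Cq u))" by (rule linU_comp[OF Cq(1) kap_lin])
    show "Vector_Spaces.linear scU scU (kap (fst m, D))" by (rule kap_lin)
  qed (simp add: Cq(2) kap_tens coef_R_elem[OF coef_R])
  have "Cq (\<Delta> x) \<noteq> 0"
  proof
    assume "Cq (\<Delta> x) = 0"
    then have "kap (fst m, D) (\<Delta> x) = 0" using kC[of "\<Delta> x"] by simp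
    then show False using m by (metis prod.collapse)
  qed
  from functional_left[OF TT this] obtain f Fl where
    f: "Vector_Spaces.linear sc (*) f" and Fl: "Vector_Spaces.linear scU sc Fl"
    "\<forall>v w. Fl (tens v w) = sc (f v) w" "Fl (Cq (\<Delta> x)) \<noteq> 0" by blast
  define y where "y = Fl (\<Delta> x)"
  have cF: "coef D (Fl u) = Fl (Cq u)" for u
  proof (rule tensor_ext[OF TT VT, where f="\<lambda>u. coef D (Fl u)" and g="\<lambda>u. Fl (Cq u)"])
    show "Vector_Spaces.linear scU sc (\<lambda>u. coef D (Fl u))"
      using Vector_Spaces.linear_compose[OF Fl(1) coef_lin] by (simp add: comp_def)
    show "Vector_Spaces.linear scU sc (\<lambda>u. Fl (Cq u))"
      using Vector_Spaces.linear_compose[OF Cq(1) Fl(1)] by (simp add: comp_def)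
    show "coef D (Fl (tens v w)) = Fl (Cq (tens v w))" for v w
      by (simp add: Fl(2) Cq(2) coef_sc)
  qed
  have c: "coef D y \<noteq> 0" unfolding y_def cF using Fl(3) .
  let ?a = "\<lambda>i. fst (ps ! i)" and ?b = "\<lambda>i. snd (ps ! i)"
  have ye: "y = (\<Sum>i<length ps. sc (f (?a i)) (?b i))"
    unfolding y_def ps(1) tsum_nth
    by (subst sum_hom[of Fl]) (auto simp: linTU_add[OF Fl(1)] linTU_zero[OF Fl(1)] Fl(2))
  have bfil: "fil D (?b i)" if "i < length ps" for i using ps(2) that by auto
  have yfil: "fil D y"
    unfolding fil_def ye coef_sum coef_sc using bfil unfolding fil_def by auto
  obtain qs where qs: "length qs = length ps" "\<forall>i<length ps. \<Delta> (snd (ps ! i)) = tsum tens (qs ! i)"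
    using qs_exists by blast
  note E = coassoc[OF ps(1) qs(1) qs(2)]
  obtain Phi where Phi: "Vector_Spaces.linear scW scU Phi" "\<forall>u t. Phi (tens3 u t) = tens (Fl u) t"
  proof -
    have "\<exists>L. Vector_Spaces.linear scW scU L \<and> (\<forall>u t. L (tens3 u t) = tens (Fl u) t)"
    proof (rule tensor_lift[OF TW VU])
      show "Vector_Spaces.linear scU scU (\<lambda>u. tens (Fl u) t)" for t
        using Vector_Spaces.linear_compose[OF Fl(1) tens_lin1] by (simp add: comp_def)
      show "Vector_Spaces.linear sc scU (\<lambda>t. tens (Fl u) t)" for u
        using tens_lin2 by simp
    qed
    then show ?thesis using that by blast
  qed
  have Padd: "Phi (a + b) = Phi a + Phi b" for a b using linTU_add[OF Phi(1)] .
  have P0: "Phi 0 = 0" using linTU_zero[OF Phi(1)] .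
  have inner: "sum_list (map (\<lambda>z. tens (sc c (fst z)) (snd z)) l) = scU c (tsum tens l)" for c l
    by (induction l) (auto simp: tens_sc1 U.scale_right_distrib)
  have "Phi (\<Sum>i<length ps. tens3 (\<Delta> (?a i)) (?b i)) = (\<Sum>i<length ps. tens (Fl (\<Delta> (?a i))) (?b i))"
    by (subst sum_hom[of Phi]) (auto simp: Padd P0 Phi(2))
  moreover have "Phi (\<Sum>i<length ps. \<Sum>(d, e)\<leftarrow>qs ! i. tens3 (tens (?a i) d) e) = \<Delta> y"
  proof -
    have "Phi (\<Sum>i<length ps. \<Sum>(d, e)\<leftarrow>qs ! i. tens3 (tens (?a i) d) e) =
       (\<Sum>i<length ps. sum_list (map (\<lambda>z. tens (sc (f (?a i)) (fst z)) (snd z)) (qs ! i)))"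
      by (subst sum_hom[of Phi], simp_all add: Padd P0, subst sum_list_hom[of Phi], simp_all add: Padd P0)
         (simp add: case_prod_beta Phi(2) Fl(2))
    also have "\<dots> = (\<Sum>i<length ps. scU (f (?a i)) (\<Delta> (?b i)))" using qs(2) by (simp add: inner)
    also have "\<dots> = \<Delta> y" unfolding ye by (simp add: D_sum D_sc)
    finally show ?thesis .
  qed
  ultimately have Dy: "\<Delta> y = (\<Sum>i<length ps. tens (Fl (\<Delta> (?a i))) (?b i))" using E by simp
  have "kap r (\<Delta> y) = 0" if "D < snd r" for r
    unfolding Dy linU_sum[OF kap_lin] kap_tens using bfil that unfolding fil_def by auto
  then show ?thesis using c yfil by blast
qed

end


context setting begin

interpretation T: vector_space sc by (rule VT)
interpretation U: vector_space scU by (rule VU)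
interpretation W: vector_space scW by (rule VW)

lemma exists_y_left:
  assumes ps: "\<Delta> x = tsum tens ps" "\<forall>z\<in>set ps. fil D (fst z)"
    and m: "kap m (\<Delta> x) \<noteq> 0" "fst m = D"
  shows "\<exists>y. fil D y \<and> coef D y \<noteq> 0 \<and> (\<forall>r. D < fst r \<longrightarrow> kap r (\<Delta> y) = 0)"
proof -
  define Cp where "Cp = tmap (coef D) id"
  have Cp: "Vector_Spaces.linear scU scU Cp" "Cp (tens v w) = tens (coef D v) w" for v w
    unfolding Cp_def using tmap[OF coef_lin T.linear_id] by auto
  have kC: "kap (0, snd m) (Cp u) = kap (D, snd m) u" for u
  proof (rule tensor_ext[OF TT VU, where f="\<lambda>u. kap (0, snd m) (Cp u)" and g="kap (D, snd m)"])
    show "Vector_Spaces.linear scU scU (\<lambda>u. kap (0, snd m) (Cp u))" by (rule linU_comp[OF Cp(1) kap_lin])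
    show "Vector_Spaces.linear scU scU (kap (D, snd m))" by (rule kap_lin)
  qed (simp add: Cp(2) kap_tens coef_R_elem[OF coef_R])
  have "Cp (\<Delta> x) \<noteq> 0"
  proof
    assume "Cp (\<Delta> x) = 0"
    then have "kap (D, snd m) (\<Delta> x) = 0" using kC[of "\<Delta> x"] by simp
    then show False using m by (metis prod.collapse)
  qed
  from functional_left[OF tensor_flip[OF TT] this] obtain f Gr where
    f: "Vector_Spaces.linear sc (*) f" and Gr: "Vector_Spaces.linear scU sc Gr"
    "\<forall>v w. Gr (tens w v) = sc (f v) w" "Gr (Cp (\<Delta> x)) \<noteq> 0" by blast
  have Gr2: "Gr (tens v w) = sc (f w) v" for v w using Gr(2) by blast
  define y where "y = Gr (\<Delta> x)"
  have cF: "coef D (Gr u) = Gr (Cp u)" for u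
  proof (rule tensor_ext[OF TT VT, where f="\<lambda>u. coef D (Gr u)" and g="\<lambda>u. Gr (Cp u)"])
    show "Vector_Spaces.linear scU sc (\<lambda>u. coef D (Gr u))"
      using Vector_Spaces.linear_compose[OF Gr(1) coef_lin] by (simp add: comp_def)
    show "Vector_Spaces.linear scU sc (\<lambda>u. Gr (Cp u))"
      using Vector_Spaces.linear_compose[OF Cp(1) Gr(1)] by (simp add: comp_def)
    show "coef D (Gr (tens v w)) = Gr (Cp (tens v w))" for v w
      by (simp add: Gr2 Cp(2) coef_sc)
  qed
  have c: "coef D y \<noteq> 0" unfolding y_def cF using Gr(3) .
  let ?a = "\<lambda>i. fst (ps ! i)" and ?b = "\<lambda>i. snd (ps ! i)"
  have ye: "y = (\<Sum>i<length ps. sc (f (?b i)) (?a i))"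
    unfolding y_def ps(1) tsum_nth
    by (subst sum_hom[of Gr]) (auto simp: linTU_add[OF Gr(1)] linTU_zero[OF Gr(1)] Gr2)
  have afil: "fil D (?a i)" if "i < length ps" for i using ps(2) that by auto
  have yfil: "fil D y"
    unfolding fil_def ye coef_sum coef_sc using afil unfolding fil_def by auto
  obtain qs where qs: "length qs = length ps" "\<forall>i<length ps. \<Delta> (snd (ps ! i)) = tsum tens (qs ! i)"
    using qs_exists by blast
  note E = coassoc[OF ps(1) qs(1) qs(2)]
  have fadd: "f (a + b) = f a + f b" for a b using linTU_add[OF f] .
  have fsc: "f (sc k a) = k * f a" for k a using linTU_sc[OF f] .
  obtain Phi where Phi: "Vector_Spaces.linear scW scU Phi" "\<forall>u t. Phi (tens3 u t) = scU (f t) u"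
  proof -
    have "\<exists>L. Vector_Spaces.linear scW scU L \<and> (\<forall>u t. L (tens3 u t) = scU (f t) u)"
    proof (rule tensor_lift[OF TW VU])
      show "Vector_Spaces.linear scU scU (\<lambda>u. scU (f t) u)" for t
        by (simp add: Vector_Spaces.linear_iff VU U.scale_right_distrib U.scale_left_commute)
      show "Vector_Spaces.linear sc scU (\<lambda>t. scU (f t) u)" for u
        by (simp add: Vector_Spaces.linear_iff VU VT U.scale_left_distrib fadd fsc)
    qed
    then show ?thesis using that by blast
  qed
  have Padd: "Phi (a + b) = Phi a + Phi b" for a b using linTU_add[OF Phi(1)] .
  have P0: "Phi 0 = 0" using linTU_zero[OF Phi(1)] .
  have Gradd: "Gr (a + b) = Gr a + Gr b" for a b using linTU_add[OF Gr(1)] .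
  have Gr0: "Gr 0 = 0" using linTU_zero[OF Gr(1)] .
  have inner: "sum_list (map (\<lambda>z. scU (f (snd z)) (tens a (fst z))) l) = tens a (Gr (tsum tens l))" for a l
    by (induction l) (auto simp: tens_sc2[symmetric] tens_add2 Gradd Gr0 Gr2)
  have "Phi (\<Sum>i<length ps. tens3 (\<Delta> (?a i)) (?b i)) = (\<Sum>i<length ps. scU (f (?b i)) (\<Delta> (?a i)))"
    by (subst sum_hom[of Phi]) (auto simp: Padd P0 Phi(2))
  also have "\<dots> = \<Delta> y" unfolding ye by (simp add: D_sum D_sc)
  finally have L: "Phi (\<Sum>i<length ps. tens3 (\<Delta> (?a i)) (?b i)) = \<Delta> y" .
  have "Phi (\<Sum>i<length ps. \<Sum>(d, e)\<leftarrow>qs ! i. tens3 (tens (?a i) d) e) =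
       (\<Sum>i<length ps. sum_list (map (\<lambda>z. scU (f (snd z)) (tens (?a i) (fst z))) (qs ! i)))"
    by (subst sum_hom[of Phi], simp_all add: Padd P0, subst sum_list_hom[of Phi], simp_all add: Padd P0)
       (simp add: case_prod_beta Phi(2))
  also have "\<dots> = (\<Sum>i<length ps. tens (?a i) (Gr (\<Delta> (?b i))))" using qs(2) by (simp add: inner)
  finally have Dy: "\<Delta> y = (\<Sum>i<length ps. tens (?a i) (Gr (\<Delta> (?b i))))" using E L by simp
  have "kap r (\<Delta> y) = 0" if "D < fst r" for r
    unfolding Dy linU_sum[OF kap_lin] kap_tens using afil that unfolding fil_def by auto
  then show ?thesis using c yfil by blast
qed

end


context setting begin

interpretation U: vector_space scU by (rule VU)

lemma UB_max:
  assumes N: "expo N u" and m: "m \<in> {p \<in> SQ N. kap p u \<noteq> 0}"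
    and mx: "\<forall>s\<in>{p \<in> SQ N. kap p u \<noteq> 0}. \<not> kless b m s"
  shows "UB b u m"
  unfolding UB_def
proof (intro allI impI)
  fix r assume r: "kless b m r"
  show "kap r u = 0"
  proof (cases "r \<in> SQ N")
    case True then show ?thesis using mx r by blast
  next
    case False
    then have "N \<le> fst r \<or> N \<le> snd r" by (cases r) auto
    then show ?thesis using N unfolding expo_def by blast
  qed
qed

lemma main:
  "\<exists>s\<in>A. \<exists>t\<in>A. \<exists>v\<in>A. \<exists>w\<in>A. \<Delta> x = s * tens 1 x + t * tens x 1 + v * tens x x + w"
proof -
  obtain N0 where N0: "expo N0 (\<Delta> x)" using expo_ex by blast
  define N where "N = max N0 2"
  have N: "expo N (\<Delta> x)" using expo_mono[OF N0] unfolding N_def by auto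
  let ?S = "{p \<in> SQ N. kap p (\<Delta> x) \<noteq> 0}"
  have bound: "fst p \<le> 1 \<and> snd p \<le> 1" if "kap p (\<Delta> x) \<noteq> 0" for p
  proof -
    have "\<not> (N \<le> fst p \<or> N \<le> snd p)" using that N unfolding expo_def by blast
    then have pS: "p \<in> ?S" using that by (cases p) auto
    then have ne: "?S \<noteq> {}" by blast
    obtain mT where mT: "mT \<in> ?S" "\<forall>s\<in>?S. \<not> kless True mT s" using max_exists[of ?S True] ne by auto
    obtain mF where mF: "mF \<in> ?S" "\<forall>s\<in>?S. \<not> kless False mF s" using max_exists[of ?S False] ne by auto
    have uT: "UB True (\<Delta> x) mT" by (rule UB_max[OF N mT])
    have uF: "UB False (\<Delta> x) mF" by (rule UB_max[OF N mF])
    have cT: "kap mT (\<Delta> x) \<noteq> 0" using mT by auto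
    have cF: "kap mF (\<Delta> x) \<noteq> 0" using mF by auto
    have bd: "fst q \<le> fst mF \<and> snd q \<le> snd mT" if "kap q (\<Delta> x) \<noteq> 0" for q
    proof -
      have "\<not> kless True mT q" "\<not> kless False mF q" using uT uF that unfolding UB_def by metis+
      then show ?thesis unfolding kless_def by auto
    qed
    obtain ps where ps: "\<Delta> x = tsum tens ps" "set ps \<subseteq> {z. fil (fst mF) (fst z) \<and> fil (snd mT) (snd z)}"
      using bounded_rep[of "\<Delta> x" "fst mF" "snd mT"] bd by blast
    have D2: "snd mT \<le> 1"
    proof (rule ccontr)
      assume h: "\<not> snd mT \<le> 1"
      obtain y where y: "fil (snd mT) y" "coef (snd mT) y \<noteq> 0" "\<forall>r. snd mT < snd r \<longrightarrow> kap r (\<Delta> y) = 0"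
        using exists_y_right[OF ps(1) _ cT refl] ps(2) by blast
      show False using key[OF uT cT _ _ y(1,2)] y(3) h by auto
    qed
    have D1: "fst mF \<le> 1"
    proof (rule ccontr)
      assume h: "\<not> fst mF \<le> 1"
      obtain y where y: "fil (fst mF) y" "coef (fst mF) y \<noteq> 0" "\<forall>r. fst mF < fst r \<longrightarrow> kap r (\<Delta> y) = 0"
        using exists_y_left[OF ps(1) _ cF refl] ps(2) by blast
      show False using key[OF uF cF _ _ y(1,2)] y(3) h by auto
    qed
    show ?thesis using bd[OF that] D1 D2 by auto
  qed
  have "\<Delta> x = (\<Sum>p\<in>SQ N. M (kap p (\<Delta> x)) p)" using N unfolding expo_def by (rule conjunct2)
  also have "\<dots> = (\<Sum>p\<in>SQ 2. M (kap p (\<Delta> x)) p)"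
  proof (rule sum.mono_neutral_right)
    show "SQ 2 \<subseteq> SQ N" unfolding N_def by auto
    show "\<forall>p\<in>SQ N - SQ 2. M (kap p (\<Delta> x)) p = 0"
    proof
      fix p assume "p \<in> SQ N - SQ 2"
      then have "kap p (\<Delta> x) = 0" using bound by (cases p) force
      then show "M (kap p (\<Delta> x)) p = 0" by simp
    qed
  qed auto
  also have "SQ 2 = {(0::nat, 0::nat), (0, 1), (1, 0), (1, 1)}"
  proof -
    have "{..<2::nat} = {0, 1}" by auto
    then show ?thesis by auto
  qed
  also have "(\<Sum>p\<in>{(0::nat, 0::nat), (0, 1), (1, 0), (1, 1)}. M (kap p (\<Delta> x)) p) =
      kap (0, 1) (\<Delta> x) * tens 1 x + kap (1, 0) (\<Delta> x) * tens x 1 + kap (1, 1) (\<Delta> x) * tens x x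
      + kap (0, 0) (\<Delta> x)"
    by (simp add: M_def tens_one algebra_simps)
  finally show ?thesis using kap_A by blast
qed

end

theorem lemma2p2p1:
  fixes sc :: "'f::field \<Rightarrow> 't::ring_1 \<Rightarrow> 't"
    and scU :: "'f \<Rightarrow> 'u::ring_1 \<Rightarrow> 'u" and tens :: "'t \<Rightarrow> 't \<Rightarrow> 'u"
    and scW :: "'f \<Rightarrow> 'w::ab_group_add \<Rightarrow> 'w" and tens3 :: "'u \<Rightarrow> 't \<Rightarrow> 'w"
    and \<Delta> :: "'t \<Rightarrow> 'u" and \<epsilon> :: "'t \<Rightarrow> 'f" and S :: "'t \<Rightarrow> 't"
    and R :: "'t set" and \<sigma> \<delta> :: "'t \<Rightarrow> 't" and x :: 't
  assumes "hopf_algebra sc scU tens scW tens3 \<Delta> \<epsilon> S"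
    and "hopf_subalgebra sc scU tens \<Delta> S R"
    and "falg_automorphism sc R \<sigma>"
    and "sigma_derivation sc R \<sigma> \<delta>"
    and "is_skew_poly_ring R \<sigma> \<delta> x"
    and "is_domain_sub (tensor_sub scU tens R)"
  shows "\<exists>s\<in>tensor_sub scU tens R. \<exists>t\<in>tensor_sub scU tens R.
         \<exists>v\<in>tensor_sub scU tens R. \<exists>w\<in>tensor_sub scU tens R.
           \<Delta> x = s * tens 1 x + t * tens x 1 + v * tens x x + w"
proof -
  interpret setting sc scU tens scW tens3 \<Delta> \<epsilon> S R \<sigma> \<delta> x
    using assms by unfold_locales
  show ?thesis by (rule main)
qed


end
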